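(* Let $\pi:F^n\to F^d$ be a coordinate projection and let $X\subseteq F^n$ be a $\pi$-special submanifold of dimension $d$. Let $f:X\to F$ be a positive definable continuous function. Then the function $g:\pi(X)\to F$ defined by $g(t)=\inf\{f(x)\;|\;x\in X\cap\pi^{-1}(t)\}$ is a positive definable continuous function.
   Context: Throughout, $\mathcal F=(F,<,+,\cdot,0,1,\ldots)$ is a definably complete locally o-minimal expansion of an ordered field: locally o-minimal means that for every definable $X\subseteq F$ and every $a\in F$ there is an open interval $I\ni a$ such that $X\cap I$ is a finite union of points and open intervals; definably complete means every definable subset of $F$ has a supremum and an infimum in $F\cup\{\pm\infty\}$. "Definable" means definable with parameters. Dimension: for nonempty definable $X\subseteq F^n$, $\dim X$ is the largest $d$ such that $\pi(X)$ has nonempty interior for some coordinate projection $\pi:F^n\to F^d$. Special submanifolds: Let $X\subseteq F^n$ be definable of dimension $d$ and $\pi:F^n\to F^d$ a coordinate projection; after permuting coordinates assume $\pi$ is the projection onto the first $d$ coordinates. First suppose $X\subseteq F^d\times(0,1)^{n-d}$. A point $(a,b)\in F^d\times F^{n-d}$ is $(X,\pi)$-normal if there are definable open neighborhoods $A$ of $a$ in $F^d$ and $B$ of $b$ in $F^{n-d}$ such that either $(A\times B)\cap X=\emptyset$ or $(A\times B)\cap X$ is the graph of a definable continuous map $A\to B$. A point $a\in F^d$ is $(X,\pi)$-good if every point of $\{a\}\times F^{n-d}$ is $(X,\pi)$-normal. For general $X$, fix a definable homeomorphism (indeed $\mathcal C^\infty$ diffeomorphism) $\phi:F\to(0,1)$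 and call $a$ $(X,\pi)$-good if it is $(\psi(X),\pi)$-good, where $\psi=\mathrm{id}_{F^d}\times\phi^{n-d}$. $X$ is a $\pi$-special submanifold if every point of $\pi(X)$ is $(X,\pi)$-good. *)

theory Defs
  imports Main
begin

definition Fn :: "nat \<Rightarrow> 'a list set" where
  "Fn n = {x. length x = n}"

text \<open>The definable sets (with parameters) of an expansion of an ordered field,
  given as a structure in the sense of van den Dries: D n is the collection of
  definable subsets of F^n.\<close>
definition ofield_structure :: "(nat \<Rightarrow> ('a::linordered_field) list set set) \<Rightarrow> bool" where
  "ofield_structure D \<longleftrightarrow>
     (\<forall>n A. A \<in> D n \<longrightarrow> A \<subseteq> Fn n) \<and>
     (\<forall>n. {} \<in> D n) \<and>
     (\<forall>n A B. A \<in> D n \<longrightarrow> B \<in> D n \<longrightarrow> A \<union> B \<in> D n) \<and>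
     (\<forall>n A. A \<in> D n \<longrightarrow> Fn n - A \<in> D n) \<and>
     (\<forall>n A. A \<in> D n \<longrightarrow> {x @ [c] | x c. x \<in> A} \<in> D (Suc n)) \<and>
     (\<forall>n A. A \<in> D n \<longrightarrow> {c # x | x c. x \<in> A} \<in> D (Suc n)) \<and>
     (\<forall>n i j. i < n \<longrightarrow> j < n \<longrightarrow> {x \<in> Fn n. x ! i = x ! j} \<in> D n) \<and>
     (\<forall>n A. A \<in> D (Suc n) \<longrightarrow> butlast ` A \<in> D n) \<and>
     (\<forall>c. {[c]} \<in> D 1) \<and>
     {[a, b] | a b. a < b} \<in> D 2 \<and>
     {[a, b, c] | a b c. c = a + b} \<in> D 3 \<and>
     {[a, b, c] | a b c. c = a * b} \<in> D 3"

definition def_map :: "(nat \<Rightarrow> 'a list set set) \<Rightarrow> nat \<Rightarrow> nat \<Rightarrow> 'a list set \<Rightarrow> ('a list \<Rightarrow> 'a list) \<Rightarrow> bool" where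
  "def_map D n m A h \<longleftrightarrow> (\<forall>x\<in>A. h x \<in> Fn m) \<and> {x @ h x | x. x \<in> A} \<in> D (n + m)"

definition locally_o_minimal :: "(nat \<Rightarrow> ('a::linordered_field) list set set) \<Rightarrow> bool" where
  "locally_o_minimal D \<longleftrightarrow>
     (\<forall>X \<in> D 1. \<forall>a. \<exists>l u. l < a \<and> a < u \<and>
        (\<exists>P Q. finite P \<and> finite Q \<and> (\<forall>(p, q) \<in> Q. p < q) \<and>
           {x. [x] \<in> X} \<inter> {l<..<u} = P \<union> (\<Union>(p, q) \<in> Q. {p<..<q})))"

text \<open>Definable completeness: every definable subset of F has sup and inf in F \<union> {\<plusminus>\<infinity>};
  i.e. a nonempty definable set bounded above (below) has a least upper (greatest lower) bound.\<close>
definition is_sup_of :: "'a::linorder set \<Rightarrow> 'a \<Rightarrow> bool" where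
  "is_sup_of S s \<longleftrightarrow> (\<forall>x\<in>S. x \<le> s) \<and> (\<forall>b. (\<forall>x\<in>S. x \<le> b) \<longrightarrow> s \<le> b)"

definition is_inf_of :: "'a::linorder set \<Rightarrow> 'a \<Rightarrow> bool" where
  "is_inf_of S s \<longleftrightarrow> (\<forall>x\<in>S. s \<le> x) \<and> (\<forall>b. (\<forall>x\<in>S. b \<le> x) \<longrightarrow> b \<le> s)"

definition definably_complete :: "(nat \<Rightarrow> ('a::linordered_field) list set set) \<Rightarrow> bool" where
  "definably_complete D \<longleftrightarrow>
     (\<forall>X \<in> D 1. let S = {x. [x] \<in> X} in
        (S \<noteq> {} \<and> (\<exists>b. \<forall>x\<in>S. x \<le> b) \<longrightarrow> (\<exists>s. is_sup_of S s)) \<and>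
        (S \<noteq> {} \<and> (\<exists>b. \<forall>x\<in>S. b \<le> x) \<longrightarrow> (\<exists>s. is_inf_of S s)))"

text \<open>Order topology on F^n (product topology = max-norm topology).\<close>
definition open_Fn :: "nat \<Rightarrow> ('a::linordered_field) list set \<Rightarrow> bool" where
  "open_Fn n U \<longleftrightarrow> U \<subseteq> Fn n \<and>
     (\<forall>x\<in>U. \<exists>e>0. \<forall>y\<in>Fn n. (\<forall>i<n. \<bar>y ! i - x ! i\<bar> < e) \<longrightarrow> y \<in> U)"

definition continuous_Fn :: "nat \<Rightarrow> nat \<Rightarrow> ('a::linordered_field) list set \<Rightarrow> ('a list \<Rightarrow> 'a list) \<Rightarrow> bool" where
  "continuous_Fn n m A h \<longleftrightarrow>
     (\<forall>a\<in>A. \<forall>e>0. \<exists>\<delta>>0. \<forall>a'\<in>A. (\<forall>i<n. \<bar>a' ! i - a ! i\<bar> < \<delta>) \<longrightarrow>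
        (\<forall>j<m. \<bar>h a' ! j - h a ! j\<bar> < e))"

definition continuous1 :: "('a::linordered_field) set \<Rightarrow> ('a \<Rightarrow> 'a) \<Rightarrow> bool" where
  "continuous1 S f \<longleftrightarrow>
     (\<forall>a\<in>S. \<forall>e>0. \<exists>\<delta>>0. \<forall>x\<in>S. \<bar>x - a\<bar> < \<delta> \<longrightarrow> \<bar>f x - f a\<bar> < e)"

definition proj :: "nat set \<Rightarrow> 'a list \<Rightarrow> 'a list" where
  "proj I x = map (\<lambda>i. x ! i) (sorted_list_of_set I)"

definition coord_proj :: "nat \<Rightarrow> nat \<Rightarrow> nat set \<Rightarrow> bool" where
  "coord_proj n d I \<longleftrightarrow> I \<subseteq> {..<n} \<and> card I = d"

definition has_interior :: "nat \<Rightarrow> ('a::linordered_field) list set \<Rightarrow> bool" where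
  "has_interior n S \<longleftrightarrow> (\<exists>U. open_Fn n U \<and> U \<noteq> {} \<and> U \<subseteq> S)"

definition has_dim :: "nat \<Rightarrow> ('a::linordered_field) list set \<Rightarrow> nat \<Rightarrow> bool" where
  "has_dim n X d \<longleftrightarrow> X \<noteq> {} \<and>
     (\<exists>I. coord_proj n d I \<and> has_interior d (proj I ` X)) \<and>
     (\<forall>I k. coord_proj n k I \<and> has_interior k (proj I ` X) \<longrightarrow> k \<le> d)"

text \<open>(Y,\<pi>_I)-normal points; the point (a,b) is the y with proj I y = a, proj J y = b,
  J the complementary coordinates.\<close>
definition normal_pt :: "(nat \<Rightarrow> ('a::linordered_field) list set set) \<Rightarrow> nat \<Rightarrow> nat set \<Rightarrow> 'a list set
     \<Rightarrow> 'a list \<Rightarrow> 'a list \<Rightarrow> bool" where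
  "normal_pt D n I Y a b \<longleftrightarrow>
     (let d = card I; J = {..<n} - I in
      \<exists>A B. A \<in> D d \<and> open_Fn d A \<and> a \<in> A \<and> B \<in> D (n - d) \<and> open_Fn (n - d) B \<and> b \<in> B \<and>
        ({y \<in> Y. proj I y \<in> A \<and> proj J y \<in> B} = {} \<or>
         (\<exists>h. (\<forall>x\<in>A. h x \<in> B) \<and> def_map D d (n - d) A h \<and> continuous_Fn d (n - d) A h \<and>
              {y \<in> Y. proj I y \<in> A \<and> proj J y \<in> B} =
                {y \<in> Fn n. proj I y \<in> A \<and> proj J y = h (proj I y)})))"

definition psi :: "('a \<Rightarrow> 'a) \<Rightarrow> nat set \<Rightarrow> 'a list \<Rightarrow> 'a list" where
  "psi \<phi> I y = map (\<lambda>k. if k \<in> I then y ! k else \<phi> (y ! k)) [0..<length y]"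

definition good_pt :: "(nat \<Rightarrow> ('a::linordered_field) list set set) \<Rightarrow> ('a \<Rightarrow> 'a) \<Rightarrow> nat \<Rightarrow> nat set
     \<Rightarrow> 'a list set \<Rightarrow> 'a list \<Rightarrow> bool" where
  "good_pt D \<phi> n I X a \<longleftrightarrow>
     (\<forall>b \<in> Fn (n - card I). normal_pt D n I (psi \<phi> I ` X) a b)"

definition special_submanifold :: "(nat \<Rightarrow> ('a::linordered_field) list set set) \<Rightarrow> ('a \<Rightarrow> 'a) \<Rightarrow> nat
     \<Rightarrow> nat set \<Rightarrow> 'a list set \<Rightarrow> bool" where
  "special_submanifold D \<phi> n I X \<longleftrightarrow> (\<forall>a \<in> proj I ` X. good_pt D \<phi> n I X a)"

definition def_homeo_01 :: "(nat \<Rightarrow> ('a::linordered_field) list set set) \<Rightarrow> ('a \<Rightarrow> 'a) \<Rightarrow> bool" where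
  "def_homeo_01 D \<phi> \<longleftrightarrow> {[t, \<phi> t] | t. True} \<in> D 2 \<and> bij_betw \<phi> UNIV {0<..<1} \<and>
     continuous1 UNIV \<phi> \<and> continuous1 {0<..<1} (inv \<phi>)"

end

theory Submission
  imports Defs
begin


definition defb :: "(nat \<Rightarrow> 'a list set set) \<Rightarrow> nat \<Rightarrow> ('a list \<Rightarrow> bool) \<Rightarrow> bool" where
  "defb D n P \<longleftrightarrow> {x \<in> Fn n. P x} \<in> D n"

locale dstr =
  fixes D :: "nat \<Rightarrow> ('a::linordered_field) list set set"
  assumes ofs: "ofield_structure D"
begin

lemmas ofs' = ofs[unfolded ofield_structure_def]
lemma ax_sub: "A \<in> D n \<Longrightarrow> A \<subseteq> Fn n" using ofs'[THEN conjunct1] by blast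
lemma ax_empty: "{} \<in> D n" using ofs'[THEN conjunct2, THEN conjunct1] by blast
lemma ax_un: "A \<in> D n \<Longrightarrow> B \<in> D n \<Longrightarrow> A \<union> B \<in> D n" using ofs'[THEN conjunct2, THEN conjunct2, THEN conjunct1] by blast
lemma ax_compl: "A \<in> D n \<Longrightarrow> Fn n - A \<in> D n" using ofs'[THEN conjunct2, THEN conjunct2, THEN conjunct2, THEN conjunct1] by blast
lemma ax_cons: "A \<in> D n \<Longrightarrow> {c # x | x c. x \<in> A} \<in> D (Suc n)" using ofs'[THEN conjunct2, THEN conjunct2, THEN conjunct2, THEN conjunct2, THEN conjunct2, THEN conjunct1] by blast
lemma ax_diag: "i < n \<Longrightarrow> j < n \<Longrightarrow> {x \<in> Fn n. x ! i = x ! j} \<in> D n" using ofs'[THEN conjunct2, THEN conjunct2, THEN conjunct2, THEN conjunct2, THEN conjunct2, THEN conjunct2, THEN conjunct1] by blast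
lemma ax_butlast: "A \<in> D (Suc n) \<Longrightarrow> butlast ` A \<in> D n" using ofs'[THEN conjunct2, THEN conjunct2, THEN conjunct2, THEN conjunct2, THEN conjunct2, THEN conjunct2, THEN conjunct2, THEN conjunct1] by blast
lemma ax_const: "{[c]} \<in> D 1" using ofs'[THEN conjunct2, THEN conjunct2, THEN conjunct2, THEN conjunct2, THEN conjunct2, THEN conjunct2, THEN conjunct2, THEN conjunct2, THEN conjunct1] by blast
lemma ax_lt: "{[a, b] | a b. a < b} \<in> D 2" using ofs'[THEN conjunct2, THEN conjunct2, THEN conjunct2, THEN conjunct2, THEN conjunct2, THEN conjunct2, THEN conjunct2, THEN conjunct2, THEN conjunct2, THEN conjunct1] by blast
lemma ax_add: "{[a, b, c] | a b c. c = a + b} \<in> D 3" using ofs'[THEN conjunct2, THEN conjunct2, THEN conjunct2, THEN conjunct2, THEN conjunct2, THEN conjunct2, THEN conjunct2, THEN conjunct2, THEN conjunct2, THEN conjunct2, THEN conjunct1] by blast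

lemma D_sub: "A \<in> D n \<Longrightarrow> A \<subseteq> Fn n"
  by (rule ax_sub)

lemma defb_set: "A \<in> D n \<Longrightarrow> defb D n (\<lambda>x. x \<in> A)"
proof -
  assume "A \<in> D n"
  moreover have "{x \<in> Fn n. x \<in> A} = A" using D_sub[OF \<open>A \<in> D n\<close>] by blast
  ultimately show ?thesis unfolding defb_def by simp
qed

lemma defb_cong: "defb D n P \<Longrightarrow> (\<And>x. length x = n \<Longrightarrow> P x = Q x) \<Longrightarrow> defb D n Q"
proof -
  assume a: "defb D n P" and b: "\<And>x. length x = n \<Longrightarrow> P x = Q x"
  have "{x \<in> Fn n. P x} = {x \<in> Fn n. Q x}" using b unfolding Fn_def by auto
  then show ?thesis using a unfolding defb_def by simp
qed

lemma defb_not: "defb D n P \<Longrightarrow> defb D n (\<lambda>x. \<not> P x)"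
proof -
  assume "defb D n P"
  then have "Fn n - {x \<in> Fn n. P x} \<in> D n" using ax_compl unfolding defb_def by blast
  moreover have "Fn n - {x \<in> Fn n. P x} = {x \<in> Fn n. \<not> P x}" by blast
  ultimately show ?thesis unfolding defb_def by simp
qed

lemma defb_or: "defb D n P \<Longrightarrow> defb D n Q \<Longrightarrow> defb D n (\<lambda>x. P x \<or> Q x)"
proof -
  assume "defb D n P" "defb D n Q"
  then have "{x \<in> Fn n. P x} \<union> {x \<in> Fn n. Q x} \<in> D n" using ax_un unfolding defb_def by blast
  moreover have "{x \<in> Fn n. P x} \<union> {x \<in> Fn n. Q x} = {x \<in> Fn n. P x \<or> Q x}" by blast
  ultimately show ?thesis unfolding defb_def by simp
qed

lemma defb_and: "defb D n P \<Longrightarrow> defb D n Q \<Longrightarrow> defb D n (\<lambda>x. P x \<and> Q x)"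
  using defb_not[OF defb_or[OF defb_not defb_not]] by simp

lemma defb_imp: "defb D n P \<Longrightarrow> defb D n Q \<Longrightarrow> defb D n (\<lambda>x. P x \<longrightarrow> Q x)"
  using defb_or[OF defb_not] by simp

lemma defb_True: "defb D n (\<lambda>x. True)"
proof -
  have "{} \<in> D n" by (rule ax_empty)
  then have "defb D n (\<lambda>x. False)" unfolding defb_def by simp
  then show ?thesis using defb_not by fastforce
qed

lemma defb_ex: "defb D (Suc n) Q \<Longrightarrow> defb D n (\<lambda>x. \<exists>c. Q (x @ [c]))"
proof -
  assume "defb D (Suc n) Q"
  then have "butlast ` {y \<in> Fn (Suc n). Q y} \<in> D n" using ax_butlast unfolding defb_def by blast
  moreover have "butlast ` {y \<in> Fn (Suc n). Q y} = {x \<in> Fn n. \<exists>c. Q (x @ [c])}"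
  proof (rule set_eqI, rule iffI)
    fix x assume "x \<in> butlast ` {y \<in> Fn (Suc n). Q y}"
    then obtain y where y: "length y = Suc n" "Q y" "x = butlast y" unfolding Fn_def by auto
    then have "y \<noteq> []" by auto
    then have yy: "x @ [last y] = y" using y(3) by simp
    have "length x = n" using y by simp
    then show "x \<in> {x \<in> Fn n. \<exists>c. Q (x @ [c])}" unfolding Fn_def using yy y(2)
      by (intro CollectI conjI exI[of _ "last y"]) auto
  next
    fix x assume "x \<in> {x \<in> Fn n. \<exists>c. Q (x @ [c])}"
    then obtain c where "length x = n" "Q (x @ [c])" unfolding Fn_def by auto
    then show "x \<in> butlast ` {y \<in> Fn (Suc n). Q y}" unfolding Fn_def
      by (intro image_eqI[of _ _ "x @ [c]"]) auto
  qed
  ultimately show ?thesis unfolding defb_def by simp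
qed

lemma defb_all: "defb D (Suc n) Q \<Longrightarrow> defb D n (\<lambda>x. \<forall>c. Q (x @ [c]))"
  using defb_not[OF defb_ex[OF defb_not]] by simp

lemma defb_ex_list: "defb D (n + k) Q \<Longrightarrow> defb D n (\<lambda>x. \<exists>ys. length ys = k \<and> Q (x @ ys))"
proof (induction k arbitrary: Q)
  case 0
  have "defb D n Q" using 0 by simp
  show ?case by (rule defb_cong[OF \<open>defb D n Q\<close>]) simp
next
  case (Suc k)
  have "defb D (n + k) (\<lambda>y. \<exists>c. Q (y @ [c]))" using defb_ex Suc.prems by simp
  from Suc.IH[OF this] show ?case
  proof (rule defb_cong)
    fix x :: "'a list"
    show "(\<exists>ys. length ys = k \<and> (\<exists>c. Q ((x @ ys) @ [c]))) = (\<exists>ys. length ys = Suc k \<and> Q (x @ ys))"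
    proof
      assume "\<exists>ys. length ys = k \<and> (\<exists>c. Q ((x @ ys) @ [c]))"
      then obtain ys c where "length ys = k" "Q ((x @ ys) @ [c])" by blast
      then show "\<exists>ys. length ys = Suc k \<and> Q (x @ ys)" by (intro exI[of _ "ys @ [c]"]) simp
    next
      assume "\<exists>ys. length ys = Suc k \<and> Q (x @ ys)"
      then obtain ys where ys: "length ys = Suc k" "Q (x @ ys)" by blast
      then have "ys \<noteq> []" by auto
      then have "butlast ys @ [last ys] = ys" by simp
      then show "\<exists>ys. length ys = k \<and> (\<exists>c. Q ((x @ ys) @ [c]))" using ys
        by (intro exI[of _ "butlast ys"] conjI exI[of _ "last ys"]) auto
    qed
  qed
qed

lemma defb_all_list: "defb D (n + k) Q \<Longrightarrow> defb D n (\<lambda>x. \<forall>ys. length ys = k \<longrightarrow> Q (x @ ys))"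
  using defb_not[OF defb_ex_list[OF defb_not]] by simp

lemma defb_conj_fin: "(\<And>j. j < (k::nat) \<Longrightarrow> defb D n (P j)) \<Longrightarrow> defb D n (\<lambda>x. \<forall>j<k. P j x)"
proof (induction k)
  case 0
  then show ?case using defb_True by simp
next
  case (Suc k)
  have "defb D n (\<lambda>x. (\<forall>j<k. P j x) \<and> P k x)" using Suc by (intro defb_and) auto
  then show ?case by (rule defb_cong) (auto simp: less_Suc_eq)
qed

lemma defb_diag: "i < n \<Longrightarrow> j < n \<Longrightarrow> defb D n (\<lambda>x. x ! i = x ! j)"
  using ax_diag unfolding defb_def by blast

lemma defb_cons: "defb D n P \<Longrightarrow> defb D (Suc n) (\<lambda>y. P (tl y))"
proof -
  assume "defb D n P"
  then have "{c # x | x c. x \<in> {x \<in> Fn n. P x}} \<in> D (Suc n)" using ax_cons unfolding defb_def by blast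
  moreover have "{c # x | x c. x \<in> {x \<in> Fn n. P x}} = {y \<in> Fn (Suc n). P (tl y)}"
  proof (rule set_eqI, rule iffI)
    fix y assume "y \<in> {y \<in> Fn (Suc n). P (tl y)}"
    then have y: "length y = Suc n" "P (tl y)" unfolding Fn_def by auto
    then have "y = hd y # tl y" by (cases y) auto
    then show "y \<in> {c # x | x c. x \<in> {x \<in> Fn n. P x}}" using y unfolding Fn_def
      by (intro CollectI exI[of _ "tl y"] exI[of _ "hd y"]) auto
  qed (auto simp: Fn_def)
  ultimately show ?thesis unfolding defb_def by simp
qed

lemma defb_drop: "defb D n P \<Longrightarrow> defb D (k + n) (\<lambda>y. P (drop k y))"
proof (induction k)
  case 0 then show ?case by simp
next
  case (Suc k)
  from defb_cons[OF Suc.IH[OF Suc.prems]] show ?case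
    by (simp add: drop_Suc tl_drop)
qed

lemma defb_reindex:
  assumes P: "defb D k P" and len: "length is = k" and bd: "\<forall>i\<in>set is. i < n"
  shows "defb D n (\<lambda>x. P (map (nth x) is))"
proof -
  have "defb D (n + k) (\<lambda>y. P (drop n y) \<and> (\<forall>j<k. y ! (is ! j) = y ! (n + j)))"
  proof (rule defb_and)
    show "defb D (n + k) (\<lambda>y. P (drop n y))" using defb_drop[OF P, of n] by (simp add: add.commute)
    show "defb D (n + k) (\<lambda>y. \<forall>j<k. y ! (is ! j) = y ! (n + j))"
      using bd len nth_mem by (intro defb_conj_fin defb_diag) fastforce+
  qed
  from defb_ex_list[OF this] show ?thesis
  proof (rule defb_cong)
    fix x :: "'a list" assume lx: "length x = n"
    show "(\<exists>ys. length ys = k \<and> P (drop n (x @ ys)) \<and> (\<forall>j<k. (x @ ys) ! (is ! j) = (x @ ys) ! (n + j))) =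
          P (map ((!) x) is)"
    proof
      assume "\<exists>ys. length ys = k \<and> P (drop n (x @ ys)) \<and> (\<forall>j<k. (x @ ys) ! (is ! j) = (x @ ys) ! (n + j))"
      then obtain ys where ys: "length ys = k" "P ys" "\<forall>j<k. (x @ ys) ! (is ! j) = (x @ ys) ! (n + j)" using lx by auto
      have "ys = map ((!) x) is"
      proof (rule nth_equalityI)
        show "length ys = length (map ((!) x) is)" using ys len by simp
        fix j assume j: "j < length ys"
        then have jk: "j < k" using ys(1) by simp
        then have ij: "is ! j < n" using bd len nth_mem by blast
        have "(x @ ys) ! (is ! j) = (x @ ys) ! (n + j)" using ys(3) jk by blast
        then show "ys ! j = map ((!) x) is ! j" using ij lx jk len
          by (simp add: nth_append)
      qed
      then show "P (map ((!) x) is)" using ys by simp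
    next
      assume "P (map ((!) x) is)"
      then show "\<exists>ys. length ys = k \<and> P (drop n (x @ ys)) \<and> (\<forall>j<k. (x @ ys) ! (is ! j) = (x @ ys) ! (n + j))"
      proof (intro exI[of _ "map ((!) x) is"] conjI allI impI)
        show "length (map ((!) x) is) = k" using len by simp
        show "P (drop n (x @ map ((!) x) is))" using lx \<open>P (map ((!) x) is)\<close> by simp
        fix j assume jk: "j < k"
        then have ij: "is ! j < n" using bd len nth_mem by blast
        show "(x @ map ((!) x) is) ! (is ! j) = (x @ map ((!) x) is) ! (n + j)"
          using ij lx jk len by (simp add: nth_append)
      qed
    qed
  qed
qed

lemma defb_mem:
  assumes "A \<in> D k" "length is = k" "\<forall>i\<in>set is. i < n"
  shows "defb D n (\<lambda>x. map (nth x) is \<in> A)"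
  using defb_reindex[OF defb_set[OF assms(1)] assms(2,3)] .

lemma defb_const: "i < n \<Longrightarrow> defb D n (\<lambda>x. x ! i = c)"
proof -
  assume i: "i < n"
  have "{[c]} \<in> D 1" by (rule ax_const)
  have "defb D n (\<lambda>x. map ((!) x) [i] \<in> {[c]})" by (rule defb_mem[OF \<open>{[c]} \<in> D 1\<close>]) (use i in auto)
  then show ?thesis by (rule defb_cong) auto
qed

lemma defb_lt: "i < n \<Longrightarrow> j < n \<Longrightarrow> defb D n (\<lambda>x. x ! i < x ! j)"
proof -
  assume ij: "i < n" "j < n"
  have "{[a, b] | a b. a < b} \<in> D 2" by (rule ax_lt)
  have "defb D n (\<lambda>x. map ((!) x) [i,j] \<in> {[a, b] | a b. a < b})" by (rule defb_mem[OF \<open>{[a, b] | a b. a < b} \<in> D 2\<close>]) (use ij in auto)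
  then show ?thesis by (rule defb_cong) auto
qed

lemma defb_add: "i < n \<Longrightarrow> j < n \<Longrightarrow> k < n \<Longrightarrow> defb D n (\<lambda>x. x ! k = x ! i + x ! j)"
proof -
  assume ij: "i < n" "j < n" "k < n"
  have "{[a, b, c] | a b c. c = a + b} \<in> D 3" by (rule ax_add)
  have "defb D n (\<lambda>x. map ((!) x) [i,j,k] \<in> {[a, b, c] | a b c. c = a + b})" by (rule defb_mem[OF \<open>{[a, b, c] | a b c. c = a + b} \<in> D 3\<close>]) (use ij in auto)
  then show ?thesis by (rule defb_cong) auto
qed

lemma defb_subst_const: "defb D (Suc n) Q \<Longrightarrow> defb D n (\<lambda>x. Q (x @ [c]))"
proof -
  assume "defb D (Suc n) Q"
  then have "defb D (Suc n) (\<lambda>y. y ! n = c \<and> Q y)" by (intro defb_and defb_const) auto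
  from defb_ex[OF this] show ?thesis by (rule defb_cong) auto
qed

lemma defb_lt_sum: "i < n \<Longrightarrow> j < n \<Longrightarrow> k < n \<Longrightarrow> defb D n (\<lambda>x. x ! i < x ! j + x ! k)"
proof -
  assume ij: "i < n" "j < n" "k < n"
  have "defb D (Suc n) (\<lambda>y. y ! n = y ! j + y ! k \<and> y ! i < y ! n)"
    using ij by (intro defb_and defb_add defb_lt) auto
  from defb_ex[OF this] show ?thesis by (rule defb_cong) (use ij in \<open>auto simp: nth_append\<close>)
qed


lemma defb_lt_c: "i < n \<Longrightarrow> defb D n (\<lambda>x. x ! i < c)"
proof -
  assume i: "i < n"
  have "defb D (Suc n) (\<lambda>y. y ! i < y ! n)" using i by (intro defb_lt) auto
  from defb_subst_const[OF this, of c] show ?thesis by (rule defb_cong) (use i in \<open>auto simp: nth_append\<close>)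
qed

lemma defb_c_lt: "i < n \<Longrightarrow> defb D n (\<lambda>x. c < x ! i)"
proof -
  assume i: "i < n"
  have "defb D (Suc n) (\<lambda>y. y ! n < y ! i)" using i by (intro defb_lt) auto
  from defb_subst_const[OF this, of c] show ?thesis by (rule defb_cong) (use i in \<open>auto simp: nth_append\<close>)
qed

lemma defb_le: "i < n \<Longrightarrow> j < n \<Longrightarrow> defb D n (\<lambda>x. x ! i \<le> x ! j)"
  using defb_not[OF defb_lt[of j n i]] by (simp add: not_less)

lemma defb_le_c: "i < n \<Longrightarrow> defb D n (\<lambda>x. x ! i \<le> c)"
  using defb_not[OF defb_c_lt[of i n c]] by (simp add: not_less)

lemma defb_c_le: "i < n \<Longrightarrow> defb D n (\<lambda>x. c \<le> x ! i)"
  using defb_not[OF defb_lt_c[of i n c]] by (simp add: not_less)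

lemma defb_subst_consts: "defb D (n + length u) Q \<Longrightarrow> defb D n (\<lambda>x. Q (x @ u))"
proof (induction u arbitrary: Q rule: rev_induct)
  case Nil
  then show ?case by simp
next
  case (snoc c u)
  have "defb D (n + length u) (\<lambda>y. Q (y @ [c]))"
    using defb_subst_const[of "n + length u" Q c] snoc.prems by simp
  from snoc.IH[OF this] show ?case by simp
qed

end

definition cube :: "nat \<Rightarrow> ('a::linordered_field) list set" where
  "cube m = {b. length b = m \<and> (\<forall>i<m. 0 \<le> b ! i \<and> b ! i \<le> 1)}"

lemma cube0: "cube 0 = {[]}" unfolding cube_def by auto
lemma cube0': "[] \<in> cube 0" unfolding cube_def by simp

locale dcstr = dstr +
  assumes dc: "definably_complete D"
begin

lemma dc_sup:
  assumes "defb D 1 (\<lambda>z. P (z ! 0))" "P x0" "\<forall>x. P x \<longrightarrow> x \<le> b"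
  shows "\<exists>s. is_sup_of {x. P x} s"
proof -
  let ?X = "{z \<in> Fn 1. P (z ! 0)}"
  have X: "?X \<in> D 1" using assms(1) unfolding defb_def .
  have eq: "{x. [x] \<in> ?X} = {x. P x}" unfolding Fn_def by auto
  note H = dc[unfolded definably_complete_def, THEN bspec, OF X]
  note H' = H[unfolded Let_def eq, THEN conjunct1]
  show ?thesis using H' assms(2,3) by blast
qed

lemma dc_inf:
  assumes "defb D 1 (\<lambda>z. P (z ! 0))" "P x0" "\<forall>x. P x \<longrightarrow> b \<le> x"
  shows "\<exists>s. is_inf_of {x. P x} s"
proof -
  let ?X = "{z \<in> Fn 1. P (z ! 0)}"
  have X: "?X \<in> D 1" using assms(1) unfolding defb_def .
  have eq: "{x. [x] \<in> ?X} = {x. P x}" unfolding Fn_def by auto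
  note H = dc[unfolded definably_complete_def, THEN bspec, OF X]
  note H' = H[unfolded Let_def eq, THEN conjunct2]
  show ?thesis using H' assms(2,3) by blast
qed

lemma cpt1:
  assumes def: "defb D 2 (\<lambda>z. E (z ! 0) (z ! 1))"
    and mono: "\<And>v r r'. E v r \<Longrightarrow> 0 < r' \<Longrightarrow> r' \<le> r \<Longrightarrow> E v r'"
    and lip: "\<And>v v' r s. E v r \<Longrightarrow> 0 < s \<Longrightarrow> \<bar>v' - v\<bar> + s \<le> r \<Longrightarrow> E v' s"
    and loc: "\<And>v. 0 \<le> v \<Longrightarrow> v \<le> 1 \<Longrightarrow> \<exists>r>0. E v r"
  shows "\<exists>r>0. \<forall>v. 0 \<le> v \<longrightarrow> v \<le> 1 \<longrightarrow> E v r"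
proof -
  define S where "S s \<longleftrightarrow> 0 \<le> s \<and> s \<le> 1 \<and> (\<exists>r>0. \<forall>v. 0 \<le> v \<longrightarrow> v \<le> s \<longrightarrow> E v r)" for s
  have defS: "defb D 1 (\<lambda>z. S (z ! 0))"
  proof -
    have d3: "defb D (Suc (Suc (Suc 0))) (\<lambda>y. 0 \<le> y ! 2 \<and> y ! 2 \<le> y ! 0 \<longrightarrow> E (y ! 2) (y ! 1))"
    proof (intro defb_imp defb_and defb_c_le defb_le)
      have "defb D (Suc (Suc (Suc 0))) (\<lambda>y. (\<lambda>z. E (z ! 0) (z ! 1)) (map ((!) y) [2, 1]))"
        by (rule defb_reindex[OF def]) auto
      then show "defb D (Suc (Suc (Suc 0))) (\<lambda>y. E (y ! 2) (y ! 1))" by simp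
    qed auto
    have d2: "defb D (Suc (Suc 0)) (\<lambda>y. 0 < y ! 1 \<and> (\<forall>v. 0 \<le> v \<and> v \<le> y ! 0 \<longrightarrow> E v (y ! 1)))"
    proof (intro defb_and defb_c_lt)
      from defb_all[OF d3] show "defb D (Suc (Suc 0)) (\<lambda>y. \<forall>v. 0 \<le> v \<and> v \<le> y ! 0 \<longrightarrow> E v (y ! 1))"
        by (rule defb_cong) (auto simp: nth_append)
    qed auto
    have d1: "defb D (Suc 0) (\<lambda>z. 0 \<le> z ! 0 \<and> z ! 0 \<le> 1 \<and> (\<exists>r. 0 < r \<and> (\<forall>v. 0 \<le> v \<and> v \<le> z ! 0 \<longrightarrow> E v r)))"
    proof (intro defb_and defb_c_le defb_le_c)
      from defb_ex[OF d2] show "defb D (Suc 0) (\<lambda>z. \<exists>r. 0 < r \<and> (\<forall>v. 0 \<le> v \<and> v \<le> z ! 0 \<longrightarrow> E v r))"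
        by (rule defb_cong) (auto simp: nth_append)
    qed auto
    have "defb D (Suc 0) (\<lambda>z. S (z ! 0))" by (rule defb_cong[OF d1]) (auto simp: S_def)
    then show ?thesis by simp
  qed
  have S0: "S 0"
  proof -
    obtain r where "r > 0" "E 0 r" using loc[of 0] by auto
    then show ?thesis unfolding S_def by (intro conjI exI[of _ r]) auto
  qed
  obtain ss where sup: "is_sup_of {x. S x} ss"
    using dc_sup[OF defS S0, of 1] unfolding S_def by auto
  have ss0: "0 \<le> ss" using sup S0 unfolding is_sup_of_def by auto
  have ss1: "ss \<le> 1" using sup unfolding is_sup_of_def S_def by auto
  obtain rr where rr: "rr > 0" "E ss rr" using loc[OF ss0 ss1] by auto
  have "\<exists>s. S s \<and> ss - rr / 2 < s"
  proof (rule ccontr)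
    assume "\<not> ?thesis"
    then have "\<forall>x\<in>{x. S x}. x \<le> ss - rr / 2" by (auto simp: not_less)
    then have "ss \<le> ss - rr / 2" using sup unfolding is_sup_of_def by blast
    then show False using rr by simp
  qed
  then obtain s where s: "S s" "ss - rr / 2 < s" by auto
  then obtain rs where rs: "rs > 0" "\<forall>v. 0 \<le> v \<longrightarrow> v \<le> s \<longrightarrow> E v rs" unfolding S_def by auto
  define s' where "s' = min 1 (ss + rr / 4)"
  define r' where "r' = min rs (rr / 2)"
  have r'pos: "r' > 0" using rs rr unfolding r'_def by simp
  have allv: "\<forall>v. 0 \<le> v \<longrightarrow> v \<le> s' \<longrightarrow> E v r'"
  proof (intro allI impI)
    fix v assume v: "0 \<le> v" "v \<le> s'"
    show "E v r'"
    proof (cases "v \<le> s")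
      case True
      then show ?thesis using rs v mono[of v rs r'] r'pos unfolding r'_def by auto
    next
      case False
      then have "\<bar>v - ss\<bar> + rr / 2 \<le> rr" using s v unfolding s'_def by (auto simp: abs_if)
      then have "E v (rr / 2)" using lip[OF rr(2), of "rr / 2" v] rr by simp
      then show ?thesis using mono[of v "rr / 2" r'] r'pos unfolding r'_def by auto
    qed
  qed
  have Ss': "S s'" unfolding S_def using allv r'pos ss0 rr unfolding s'_def by auto
  then have "s' \<le> ss" using sup unfolding is_sup_of_def by auto
  then have "ss = 1" using ss1 rr unfolding s'_def by (auto simp: min_def split: if_splits)
  then have "s' = 1" using \<open>s' \<le> ss\<close> ss1 rr unfolding s'_def by auto
  then show ?thesis using allv r'pos by auto
qed


lemma cube_Suc: "b \<in> cube (Suc m) \<longleftrightarrow> (\<exists>u v. b = u @ [v] \<and> u \<in> cube m \<and> 0 \<le> v \<and> v \<le> 1)"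
proof
  assume b: "b \<in> cube (Suc m)"
  then have "b \<noteq> []" unfolding cube_def by auto
  then have bb: "b = butlast b @ [last b]" by simp
  have lb: "length (butlast b) = m" using b unfolding cube_def by auto
  have "butlast b \<in> cube m" unfolding cube_def
  proof (intro CollectI conjI allI impI lb)
    fix i assume "i < m"
    then have "butlast b ! i = b ! i" using lb by (simp add: nth_butlast)
    then show "0 \<le> butlast b ! i" "butlast b ! i \<le> 1" using b \<open>i < m\<close> unfolding cube_def by auto
  qed
  moreover have "b ! m = last b" using bb lb by (metis nth_append_length)
  ultimately show "\<exists>u v. b = u @ [v] \<and> u \<in> cube m \<and> 0 \<le> v \<and> v \<le> 1"
    using b bb unfolding cube_def by (intro exI[of _ "butlast b"] exI[of _ "last b"]) auto
next
  assume "\<exists>u v. b = u @ [v] \<and> u \<in> cube m \<and> 0 \<le> v \<and> v \<le> 1"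
  then obtain u v where "b = u @ [v]" "u \<in> cube m" "0 \<le> v" "v \<le> 1" by blast
  then show "b \<in> cube (Suc m)" unfolding cube_def by (auto simp: nth_append less_Suc_eq)
qed

lemma cptm:
  assumes def: "defb D (Suc m) (\<lambda>z. E (take m z) (z ! m))"
    and mono: "\<And>b r r'. E b r \<Longrightarrow> 0 < r' \<Longrightarrow> r' \<le> r \<Longrightarrow> E b r'"
    and lip: "\<And>b b' r s. length b = m \<Longrightarrow> length b' = m \<Longrightarrow> E b r \<Longrightarrow> 0 < s \<Longrightarrow> s \<le> r \<Longrightarrow>
                 (\<forall>i<m. \<bar>b' ! i - b ! i\<bar> + s \<le> r) \<Longrightarrow> E b' s"
    and loc: "\<And>b. b \<in> cube m \<Longrightarrow> \<exists>r>0. E b r"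
  shows "\<exists>r>0. \<forall>b\<in>cube m. E b r"
  using assms
proof (induction m arbitrary: E)
  case 0
  have "\<exists>r>0. E [] r" by (rule "0.prems"(4)[OF cube0'])
  then obtain r where r: "0 < r" "E [] r" by blast
  show ?case
  proof (intro exI[of _ r] conjI ballI)
    show "0 < r" by (rule r(1))
    fix b :: "'a list" assume "b \<in> cube 0"
    then have "b = []" unfolding cube_def by simp
    then show "E b r" using r(2) by simp
  qed
next
  case (Suc m)
  note def = Suc.prems(1) and mono = Suc.prems(2) and lip = Suc.prems(3) and loc = Suc.prems(4)
  define E' where "E' u r \<longleftrightarrow> (\<forall>v. 0 \<le> v \<longrightarrow> v \<le> 1 \<longrightarrow> E (u @ [v]) r)" for u r
  have def': "defb D (Suc m) (\<lambda>z. E' (take m z) (z ! m))"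
  proof -
    let ?is = "[0..<m] @ [Suc m, m]"
    have "defb D (Suc (Suc m)) (\<lambda>y. (\<lambda>z. E (take (Suc m) z) (z ! Suc m)) (map ((!) y) ?is))"
      by (rule defb_reindex[OF def]) auto
    then have "defb D (Suc (Suc m)) (\<lambda>y. E (take m y @ [y ! Suc m]) (y ! m))"
    proof (rule defb_cong)
      fix y :: "'a list" assume ly: "length y = Suc (Suc m)"
      then have "map ((!) y) [0..<m] = take m y"
        by (intro nth_equalityI) auto
      then show "E (take (Suc m) (map ((!) y) ?is)) (map ((!) y) ?is ! Suc m) = E (take m y @ [y ! Suc m]) (y ! m)"
        using ly by (simp add: nth_append)
    qed
    then have "defb D (Suc (Suc m)) (\<lambda>y. 0 \<le> y ! Suc m \<longrightarrow> y ! Suc m \<le> 1 \<longrightarrow> E (take m y @ [y ! Suc m]) (y ! m))"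
      by (intro defb_imp defb_c_le defb_le_c) auto
    from defb_all[OF this] show ?thesis
      by (rule defb_cong) (auto simp: nth_append E'_def)
  qed
  have mono': "\<And>b r r'. E' b r \<Longrightarrow> 0 < r' \<Longrightarrow> r' \<le> r \<Longrightarrow> E' b r'"
    unfolding E'_def using mono by blast
  have lip': "\<And>b b' r s. length b = m \<Longrightarrow> length b' = m \<Longrightarrow> E' b r \<Longrightarrow> 0 < s \<Longrightarrow> s \<le> r \<Longrightarrow>
                 (\<forall>i<m. \<bar>b' ! i - b ! i\<bar> + s \<le> r) \<Longrightarrow> E' b' s"
  proof -
    fix b b' :: "'a list" and r s :: 'a
    assume h: "length b = m" "length b' = m" "E' b r" "0 < s" "s \<le> r" "\<forall>i<m. \<bar>b' ! i - b ! i\<bar> + s \<le> r"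
    show "E' b' s" unfolding E'_def
    proof (intro allI impI)
      fix v :: 'a assume v: "0 \<le> v" "v \<le> 1"
      have "E (b @ [v]) r" using h(3) v unfolding E'_def by blast
      moreover have "\<forall>i<Suc m. \<bar>(b' @ [v]) ! i - (b @ [v]) ! i\<bar> + s \<le> r"
        using h by (auto simp: nth_append less_Suc_eq)
      ultimately show "E (b' @ [v]) s" using lip[of "b @ [v]" "b' @ [v]" r s] h by simp
    qed
  qed
  have loc': "\<And>u. u \<in> cube m \<Longrightarrow> \<exists>r>0. E' u r"
  proof -
    fix u :: "'a list" assume u: "u \<in> cube m"
    then have lu: "length u = m" unfolding cube_def by auto
    let ?is = "[2..<m+2] @ [0, 1]"
    have "defb D (2 + m) (\<lambda>y. (\<lambda>z. E (take (Suc m) z) (z ! Suc m)) (map ((!) y) ?is))"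
      by (rule defb_reindex[OF def]) auto
    then have "defb D (2 + m) (\<lambda>y. E (drop 2 y @ [y ! 0]) (y ! 1))"
    proof (rule defb_cong)
      fix y :: "'a list" assume ly: "length y = 2 + m"
      then have "map ((!) y) [2..<m+2] = drop 2 y"
        by (intro nth_equalityI) (simp_all del: upt_Suc add: nth_upt)
      then show "E (take (Suc m) (map ((!) y) ?is)) (map ((!) y) ?is ! Suc m) = E (drop 2 y @ [y ! 0]) (y ! 1)"
        using ly by (simp add: nth_append)
    qed
    then have "defb D (2 + length u) (\<lambda>y. E (drop 2 y @ [y ! 0]) (y ! 1))" using lu by simp
    from defb_subst_consts[OF this] have "defb D 2 (\<lambda>x. E (drop 2 (x @ u) @ [(x @ u) ! 0]) ((x @ u) ! 1))" .
    then have d2: "defb D 2 (\<lambda>z. E (u @ [z ! 0]) (z ! 1))"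
      by (rule defb_cong) (auto simp: nth_append)
    have "\<exists>r>0. \<forall>v. 0 \<le> v \<longrightarrow> v \<le> 1 \<longrightarrow> E (u @ [v]) r"
    proof (rule cpt1[OF d2])
      show "\<And>v r r'. E (u @ [v]) r \<Longrightarrow> 0 < r' \<Longrightarrow> r' \<le> r \<Longrightarrow> E (u @ [v]) r'" using mono by blast
      show "\<And>v v' r s. E (u @ [v]) r \<Longrightarrow> 0 < s \<Longrightarrow> \<bar>v' - v\<bar> + s \<le> r \<Longrightarrow> E (u @ [v']) s"
      proof -
        fix v v' r s assume h: "E (u @ [v]) r" "0 < (s::'a)" "\<bar>v' - v\<bar> + s \<le> r"
        have "s \<le> r" using h(3) using abs_ge_zero[of "v' - v"] by linarith
        moreover have "\<forall>i<Suc m. \<bar>(u @ [v']) ! i - (u @ [v]) ! i\<bar> + s \<le> r"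
          using h lu \<open>s \<le> r\<close> by (auto simp: nth_append less_Suc_eq)
        ultimately show "E (u @ [v']) s" using lip[of "u @ [v]" "u @ [v']" r s] h lu by simp
      qed
      show "\<And>v. 0 \<le> v \<Longrightarrow> v \<le> 1 \<Longrightarrow> \<exists>r>0. E (u @ [v]) r"
        using loc u cube_Suc by blast
    qed
    then show "\<exists>r>0. E' u r" unfolding E'_def .
  qed
  have "\<exists>r>0. \<forall>b\<in>cube m. E' b r"
    apply (rule Suc.IH[of E'])
       apply (rule def')
      apply (rule mono'; assumption)
     apply (rule lip'; assumption)
    apply (rule loc'; assumption)
    done
  then obtain r where r: "r > 0" "\<forall>u\<in>cube m. E' u r" by blast
  show ?case
  proof (intro exI[of _ r] conjI ballI r(1))
    fix b :: "'a list" assume "b \<in> cube (Suc m)"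
    then obtain u v where "b = u @ [v]" "u \<in> cube m" "0 \<le> v" "v \<le> 1" using cube_Suc by blast
    then show "E b r" using r unfolding E'_def by blast
  qed
qed

end



lemma fin_min:
  assumes "\<And>j. j < (m::nat) \<Longrightarrow> \<exists>e>0. P j (e::'a::linordered_field)"
    and "\<And>j e e'. P j e \<Longrightarrow> 0 < e' \<Longrightarrow> e' \<le> e \<Longrightarrow> P j e'"
  shows "\<exists>e>0. \<forall>j<m. P j e"
  using assms(1)
proof (induction m)
  case 0
  then show ?case by (intro exI[of _ 1]) auto
next
  case (Suc m)
  obtain e1 where e1: "e1 > 0" "\<forall>j<m. P j e1" using Suc by auto
  obtain e2 where e2: "e2 > 0" "P m e2" using Suc.prems[of m] by auto
  show ?case
  proof (intro exI[of _ "min e1 e2"] conjI allI impI)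
    show "0 < min e1 e2" using e1 e2 by simp
    fix j assume "j < Suc m"
    then show "P j (min e1 e2)"
      using assms(2) e1 e2 by (cases "j < m") (auto simp: less_Suc_eq)
  qed
qed

lemma open_FnD: "open_Fn d A \<Longrightarrow> a \<in> A \<Longrightarrow> \<exists>e>0. \<forall>y. length y = d \<longrightarrow> (\<forall>i<d. \<bar>y ! i - a ! i\<bar> < e) \<longrightarrow> y \<in> A"
  unfolding open_Fn_def Fn_def by blast

locale setting = dcstr D for D :: "nat \<Rightarrow> ('a::linordered_field) list set set" +
  fixes \<phi> :: "'a \<Rightarrow> 'a" and n d :: nat and I :: "nat set"
    and X :: "'a list set" and f :: "'a list \<Rightarrow> 'a"
  assumes homeo: "def_homeo_01 D \<phi>"
    and cp: "coord_proj n d I"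
    and XD: "X \<in> D n" and spec: "special_submanifold D \<phi> n I X"
    and fpos: "\<forall>x\<in>X. 0 < f x"
    and fdef: "def_map D n 1 X (\<lambda>x. [f x])"
    and fcont: "continuous_Fn n 1 X (\<lambda>x. [f x])"
begin

abbreviation "Is \<equiv> sorted_list_of_set I"
abbreviation "J \<equiv> {..<n} - I"
abbreviation "Js \<equiv> sorted_list_of_set J"
abbreviation "m \<equiv> n - d"

lemma Isub: "I \<subseteq> {..<n}" and cardI: "card I = d" using cp unfolding coord_proj_def by auto
lemma finI: "finite I" using Isub finite_subset by blast
lemma setIs: "set Is = I" using finI by simp
lemma distIs: "distinct Is" by simp
lemma lenIs: "length Is = d" using cardI by simp
lemma setJs: "set Js = J" by (rule set_sorted_list_of_set) simp
lemma distJs: "distinct Js" by (rule distinct_sorted_list_of_set)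
lemma lenJs: "length Js = m"
proof -
  have "length Js = card J" by (rule length_sorted_list_of_set)
  also have "\<dots> = n - d" using cardI Isub finI by (simp add: card_Diff_subset)
  finally show ?thesis .
qed
lemma Is_lt: "i < d \<Longrightarrow> Is ! i < n" using setIs lenIs Isub nth_mem by fastforce
lemma Is_in: "i < d \<Longrightarrow> Is ! i \<in> I" using setIs lenIs nth_mem by fastforce
lemma Js_mem: "j < m \<Longrightarrow> Js ! j \<in> {..<n} - I"
proof -
  assume "j < m"
  then have "j < length Js" using lenJs by simp
  then have "Js ! j \<in> set Js" by (rule nth_mem)
  then show ?thesis using setJs by blast
qed
lemma Js_lt: "j < m \<Longrightarrow> Js ! j < n" using Js_mem by blast
lemma Js_nin: "j < m \<Longrightarrow> Js ! j \<notin> I" using Js_mem by blast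
lemma dn: "d \<le> n" using Isub cardI card_mono[of "{..<n}" I] by simp

lemma cover: "k < n \<Longrightarrow> (\<exists>i<d. Is ! i = k) \<or> (\<exists>j<m. Js ! j = k)"
proof -
  assume k: "k < n"
  show ?thesis
  proof (cases "k \<in> I")
    case True
    then have "k \<in> set Is" using setIs by simp
    then show ?thesis using lenIs by (auto simp: in_set_conv_nth)
  next
    case False
    then have "k \<in> set Js" using k setJs by simp
    then show ?thesis using lenJs by (metis in_set_conv_nth)
  qed
qed

lemma projI_len: "length (proj I x) = d" unfolding proj_def using lenIs by simp
lemma projJ_len: "length (proj J x) = m" unfolding proj_def using lenJs by simp
lemma projI_nth: "i < d \<Longrightarrow> proj I x ! i = x ! (Is ! i)" unfolding proj_def using lenIs by simp
lemma projJ_nth: "j < m \<Longrightarrow> proj J x ! j = x ! (Js ! j)" unfolding proj_def using lenJs by simp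

lemma psi_len: "length (psi \<phi> I y) = length y" unfolding psi_def by simp
lemma psi_nth: "k < length y \<Longrightarrow> psi \<phi> I y ! k = (if k \<in> I then y ! k else \<phi> (y ! k))"
  unfolding psi_def by simp
lemma projI_psi: "length y = n \<Longrightarrow> proj I (psi \<phi> I y) = proj I y"
  by (intro nth_equalityI) (auto simp: projI_len projI_nth psi_nth Is_lt Is_in)
lemma projJ_psi: "length y = n \<Longrightarrow> proj J (psi \<phi> I y) = map \<phi> (proj J y)"
  by (intro nth_equalityI) (auto simp: projJ_len projJ_nth psi_nth Js_lt Js_nin)

lemma merge: "length a = d \<Longrightarrow> length c = m \<Longrightarrow> \<exists>y. length y = n \<and> proj I y = a \<and> proj J y = c"
proof -
  assume la: "length a = d" and lc: "length c = m"
  define y where "y = map (\<lambda>k. if k \<in> I then a ! (THE i. i < d \<and> Is ! i = k) else c ! (THE j. j < m \<and> Js ! j = k)) [0..<n]"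
  have thI: "(THE i'. i' < d \<and> Is ! i' = Is ! i) = i" if "i < d" for i
    using that distIs lenIs by (intro the_equality) (auto simp: nth_eq_iff_index_eq)
  have thJ: "(THE j'. j' < m \<and> Js ! j' = Js ! j) = j" if "j < m" for j
    using that distJs lenJs by (intro the_equality) (auto simp: nth_eq_iff_index_eq)
  have "proj I y = a"
    by (intro nth_equalityI) (auto simp: projI_len la projI_nth y_def Is_lt Is_in thI)
  moreover have "proj J y = c"
    by (intro nth_equalityI) (auto simp: projJ_len lc projJ_nth y_def Js_lt Js_nin thJ)
  ultimately show ?thesis unfolding y_def by (intro exI[of _ y]) (simp add: y_def)
qed

lemma close_all:
  assumes "length x = n" "length x0 = n"
    "\<forall>i<d. \<bar>x ! (Is ! i) - x0 ! (Is ! i)\<bar> < e" "\<forall>j<m. \<bar>x ! (Js ! j) - x0 ! (Js ! j)\<bar> < e"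
  shows "\<forall>k<n. \<bar>x ! k - x0 ! k\<bar> < e"
  using cover assms(3,4) by blast

lemma phi_bij: "bij_betw \<phi> UNIV {0<..<1}" using homeo unfolding def_homeo_01_def by blast
lemma phi_range: "0 < \<phi> t" "\<phi> t < 1" using phi_bij unfolding bij_betw_def by auto
lemma phi_inv: "inv \<phi> (\<phi> t) = t" using phi_bij unfolding bij_betw_def by (simp add: inv_f_f)
lemma phi_graph: "{[t, \<phi> t] | t. True} \<in> D 2" using homeo unfolding def_homeo_01_def by blast
lemma inv_cont: "continuous1 {0<..<1} (inv \<phi>)" using homeo unfolding def_homeo_01_def by blast

lemma phi_inv_close: assumes e: "e > 0" shows "\<exists>\<epsilon>>0. \<forall>t. \<bar>\<phi> t - \<phi> t0\<bar> < \<epsilon> \<longrightarrow> \<bar>t - t0\<bar> < e"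
proof -
  have "\<phi> t0 \<in> {0<..<1}" using phi_range by auto
  then obtain \<epsilon> where "\<epsilon> > 0" "\<forall>w\<in>{0<..<1}. \<bar>w - \<phi> t0\<bar> < \<epsilon> \<longrightarrow> \<bar>inv \<phi> w - inv \<phi> (\<phi> t0)\<bar> < e"
    using inv_cont e unfolding continuous1_def by blast
  then show ?thesis using phi_range phi_inv by (intro exI[of _ \<epsilon>]) auto
qed

definition "Gf = {x @ [f x] | x. x \<in> X}"
lemma Gf_D: "Gf \<in> D (Suc n)" using fdef unfolding def_map_def Gf_def by simp
lemma X_len: "x \<in> X \<Longrightarrow> length x = n" using D_sub[OF XD] unfolding Fn_def by auto
lemma Gf_iff: "length x = n \<Longrightarrow> x @ [v] \<in> Gf \<longleftrightarrow> x \<in> X \<and> v = f x"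
  unfolding Gf_def by auto


definition "T = proj I ` X"
definition "V t = {f x | x. x \<in> X \<and> proj I x = t}"

lemma forall_X_Gf: "(\<forall>x\<in>X. R x (f x)) \<longleftrightarrow> (\<forall>ws. length ws = Suc n \<longrightarrow> ws \<in> Gf \<longrightarrow> R (take n ws) (ws ! n))"
proof
  assume H: "\<forall>x\<in>X. R x (f x)"
  show "\<forall>ws. length ws = Suc n \<longrightarrow> ws \<in> Gf \<longrightarrow> R (take n ws) (ws ! n)"
  proof (intro allI impI)
    fix ws :: "'a list" assume "length ws = Suc n" "ws \<in> Gf"
    then obtain x where x: "x \<in> X" "ws = x @ [f x]" unfolding Gf_def by auto
    then have "length x = n" using X_len by simp
    then show "R (take n ws) (ws ! n)" using x H by (simp add: nth_append)
  qed
next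
  assume H: "\<forall>ws. length ws = Suc n \<longrightarrow> ws \<in> Gf \<longrightarrow> R (take n ws) (ws ! n)"
  show "\<forall>x\<in>X. R x (f x)"
  proof
    fix x assume x: "x \<in> X"
    then have lx: "length x = n" using X_len by simp
    have "x @ [f x] \<in> Gf" unfolding Gf_def using x by auto
    then show "R x (f x)" using H[rule_format, of "x @ [f x]"] lx by (simp add: nth_append)
  qed
qed

lemma blk: "length z = k \<Longrightarrow> length ws = l \<Longrightarrow> map ((!) (z @ ws)) [k..<k+l] = ws"
  by (intro nth_equalityI) (simp_all del: upt_Suc add: nth_append)

end

context dstr
begin

lemma defb_absdiff: "p < N \<Longrightarrow> j < N \<Longrightarrow> q < N \<Longrightarrow> defb D N (\<lambda>x. \<bar>x ! p - x ! j\<bar> < x ! q)"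
proof -
  assume h: "p < N" "j < N" "q < N"
  have "defb D N (\<lambda>x. x ! p < x ! j + x ! q \<and> x ! j < x ! p + x ! q)"
    using h by (intro defb_and defb_lt_sum) auto
  then show ?thesis by (rule defb_cong) (auto simp: abs_less_iff algebra_simps)
qed

lemma defb_absdiff_c: "p < N \<Longrightarrow> q < N \<Longrightarrow> defb D N (\<lambda>x. \<bar>x ! p - c\<bar> < x ! q)"
proof -
  assume h: "p < N" "q < N"
  have "defb D (Suc N) (\<lambda>y. \<bar>y ! p - y ! N\<bar> < y ! q)" using h by (intro defb_absdiff) auto
  from defb_subst_const[OF this, of c] show ?thesis by (rule defb_cong) (use h in \<open>auto simp: nth_append\<close>)
qed

lemma defb_c_plus_le: "i < N \<Longrightarrow> k < N \<Longrightarrow> defb D N (\<lambda>x. c + x ! i \<le> x ! k)"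
proof -
  assume h: "i < N" "k < N"
  have "defb D (Suc N) (\<lambda>y. \<not> y ! k < y ! N + y ! i)" using h by (intro defb_not defb_lt_sum) auto
  from defb_subst_const[OF this, of c] show ?thesis by (rule defb_cong) (use h in \<open>auto simp: nth_append not_less\<close>)
qed

end

context setting
begin

lemma V_def1: "length t = d \<Longrightarrow> defb D 1 (\<lambda>z. \<exists>x. x \<in> X \<and> proj I x = t \<and> z ! 0 = f x)"
proof -
  assume lt: "length t = d"
  have "defb D (1 + n) (\<lambda>y. map ((!) y) ([1..<1+n] @ [0]) \<in> Gf \<and> (\<forall>i<d. y ! (1 + Is ! i) = t ! i))"
  proof (intro defb_and defb_conj_fin defb_const)
    show "defb D (1 + n) (\<lambda>y. map ((!) y) ([1..<1+n] @ [0]) \<in> Gf)"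
      by (rule defb_mem[OF Gf_D]) auto
  qed (use Is_lt in auto)
  from defb_ex_list[OF this] show ?thesis
  proof (rule defb_cong)
    fix z :: "'a list" assume lz: "length z = 1"
    show "(\<exists>ys. length ys = n \<and> map ((!) (z @ ys)) ([1..<1 + n] @ [0]) \<in> Gf \<and> (\<forall>i<d. (z @ ys) ! (1 + Is ! i) = t ! i)) =
          (\<exists>x. x \<in> X \<and> proj I x = t \<and> z ! 0 = f x)"
    proof
      assume "\<exists>ys. length ys = n \<and> map ((!) (z @ ys)) ([1..<1 + n] @ [0]) \<in> Gf \<and> (\<forall>i<d. (z @ ys) ! (1 + Is ! i) = t ! i)"
      then obtain ys where ys: "length ys = n" "map ((!) (z @ ys)) ([1..<1 + n] @ [0]) \<in> Gf" "\<forall>i<d. (z @ ys) ! (1 + Is ! i) = t ! i" by blast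
      have "map ((!) (z @ ys)) ([1..<1 + n] @ [0]) = ys @ [z ! 0]" using blk[OF lz ys(1)] lz by (simp add: nth_append)
      then have g: "ys \<in> X" "z ! 0 = f ys" using ys Gf_iff by auto
      have "proj I ys = t"
        by (intro nth_equalityI) (use ys(3) lz lt in \<open>auto simp: projI_len projI_nth nth_append\<close>)
      then show "\<exists>x. x \<in> X \<and> proj I x = t \<and> z ! 0 = f x" using g by blast
    next
      assume "\<exists>x. x \<in> X \<and> proj I x = t \<and> z ! 0 = f x"
      then obtain x where x: "x \<in> X" "proj I x = t" "z ! 0 = f x" by blast
      then have lx: "length x = n" using X_len by simp
      have "map ((!) (z @ x)) ([1..<1 + n] @ [0]) = x @ [z ! 0]" using blk[OF lz lx] lz by (simp add: nth_append)
      moreover have "\<forall>i<d. (z @ x) ! (1 + Is ! i) = t ! i" using x(2) lz by (auto simp: projI_nth[symmetric] nth_append)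
      ultimately show "\<exists>ys. length ys = n \<and> map ((!) (z @ ys)) ([1..<1 + n] @ [0]) \<in> Gf \<and> (\<forall>i<d. (z @ ys) ! (1 + Is ! i) = t ! i)"
        using lx x Gf_iff by (intro exI[of _ x]) auto
    qed
  qed
qed

lemma inf_ex: "t \<in> T \<Longrightarrow> \<exists>s. is_inf_of (V t) s"
proof -
  assume t: "t \<in> T"
  then obtain x0 where x0: "x0 \<in> X" "proj I x0 = t" unfolding T_def by auto
  have lt: "length t = d" using x0 projI_len by auto
  have eq: "V t = {v. \<exists>x. x \<in> X \<and> proj I x = t \<and> v = f x}" unfolding V_def by auto
  have "\<exists>s. is_inf_of {v. \<exists>x. x \<in> X \<and> proj I x = t \<and> v = f x} s"
    by (rule dc_inf[OF V_def1[OF lt], of "f x0" 0]) (use x0 fpos in \<open>auto simp: less_imp_le\<close>)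
  then show ?thesis unfolding eq .
qed

definition "g t = (SOME s. is_inf_of (V t) s)"

lemma g_inf: "t \<in> T \<Longrightarrow> is_inf_of (V t) (g t)"
  unfolding g_def using inf_ex someI_ex by metis

lemma inf_unique: "is_inf_of S a \<Longrightarrow> is_inf_of S b \<Longrightarrow> a = (b::'a)"
  unfolding is_inf_of_def by (meson order_antisym)


lemma projI_eq: "length x = n \<Longrightarrow> length t = d \<Longrightarrow> proj I x = t \<longleftrightarrow> (\<forall>i<d. x ! (Is ! i) = t ! i)"
proof
  assume "length x = n" "length t = d" "proj I x = t"
  then show "\<forall>i<d. x ! (Is ! i) = t ! i" using projI_nth by metis
next
  assume h: "length x = n" "length t = d" "\<forall>i<d. x ! (Is ! i) = t ! i"
  show "proj I x = t" by (intro nth_equalityI) (use h in \<open>auto simp: projI_len projI_nth\<close>)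
qed

lemma LB_def:
  assumes tI: "length tI = d" "\<forall>i\<in>set tI. i < N" and bq: "bq < N"
  shows "defb D N (\<lambda>z. \<forall>x\<in>X. proj I x = map ((!) z) tI \<longrightarrow> z ! bq \<le> f x)"
proof -
  have "defb D (N + Suc n) (\<lambda>y. map ((!) y) [N..<N + Suc n] \<in> Gf \<longrightarrow> (\<forall>i<d. y ! (N + Is ! i) = y ! (tI ! i)) \<longrightarrow> y ! bq \<le> y ! (N + n))"
  proof (intro defb_imp defb_conj_fin defb_diag defb_le)
    show "defb D (N + Suc n) (\<lambda>y. map ((!) y) [N..<N + Suc n] \<in> Gf)" by (rule defb_mem[OF Gf_D]) auto
  qed (use Is_lt tI bq nth_mem in \<open>fastforce+\<close>)
  from defb_all_list[OF this] show ?thesis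
  proof (rule defb_cong)
    fix z :: "'a list" assume lz: "length z = N"
    have "(\<forall>x\<in>X. proj I x = map ((!) z) tI \<longrightarrow> z ! bq \<le> f x) \<longleftrightarrow>
          (\<forall>ws. length ws = Suc n \<longrightarrow> ws \<in> Gf \<longrightarrow> (proj I (take n ws) = map ((!) z) tI \<longrightarrow> z ! bq \<le> ws ! n))"
      by (rule forall_X_Gf)
    also have "\<dots> \<longleftrightarrow> (\<forall>ws. length ws = Suc n \<longrightarrow> map ((!) (z @ ws)) [N..<N + Suc n] \<in> Gf \<longrightarrow>
          (\<forall>i<d. (z @ ws) ! (N + Is ! i) = (z @ ws) ! (tI ! i)) \<longrightarrow> (z @ ws) ! bq \<le> (z @ ws) ! (N + n))"
    proof (intro all_cong1 imp_cong refl)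
      fix ws :: "'a list" assume lw: "length ws = Suc n"
      show "(ws \<in> Gf) = (map ((!) (z @ ws)) [N..<N + Suc n] \<in> Gf)" using blk[OF lz lw] by simp
      have "proj I (take n ws) = map ((!) z) tI \<longleftrightarrow> (\<forall>i<d. take n ws ! (Is ! i) = map ((!) z) tI ! i)"
        using lw tI by (intro projI_eq) auto
      also have "\<dots> \<longleftrightarrow> (\<forall>i<d. (z @ ws) ! (N + Is ! i) = (z @ ws) ! (tI ! i))"
        using lz lw tI Is_lt nth_mem by (auto simp: nth_append)
      finally show "(proj I (take n ws) = map ((!) z) tI) = (\<forall>i<d. (z @ ws) ! (N + Is ! i) = (z @ ws) ! (tI ! i))" .
      show "(z ! bq \<le> ws ! n) = ((z @ ws) ! bq \<le> (z @ ws) ! (N + n))" using lz bq by (simp add: nth_append)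
    qed
    finally show "(\<forall>ys. length ys = Suc n \<longrightarrow> (map ((!) (z @ ys)) [N..<N + Suc n] \<in> Gf \<longrightarrow>
          (\<forall>i<d. (z @ ys) ! (N + Is ! i) = (z @ ys) ! (tI ! i)) \<longrightarrow> (z @ ys) ! bq \<le> (z @ ys) ! (N + n))) =
        (\<forall>x\<in>X. proj I x = map ((!) z) tI \<longrightarrow> z ! bq \<le> f x)" by simp
  qed
qed

lemma EX_def:
  assumes tI: "length tI = d" "\<forall>i\<in>set tI. i < N"
  shows "defb D N (\<lambda>z. \<exists>x\<in>X. proj I x = map ((!) z) tI)"
proof -
  have "defb D (N + n) (\<lambda>y. map ((!) y) [N..<N + n] \<in> X \<and> (\<forall>i<d. y ! (N + Is ! i) = y ! (tI ! i)))"
  proof (intro defb_and defb_conj_fin defb_diag)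
    show "defb D (N + n) (\<lambda>y. map ((!) y) [N..<N + n] \<in> X)" by (rule defb_mem[OF XD]) auto
  qed (use Is_lt tI nth_mem in \<open>fastforce+\<close>)
  from defb_ex_list[OF this] show ?thesis
  proof (rule defb_cong)
    fix z :: "'a list" assume lz: "length z = N"
    show "(\<exists>ys. length ys = n \<and> map ((!) (z @ ys)) [N..<N + n] \<in> X \<and> (\<forall>i<d. (z @ ys) ! (N + Is ! i) = (z @ ys) ! (tI ! i))) =
          (\<exists>x\<in>X. proj I x = map ((!) z) tI)"
    proof
      assume "\<exists>ys. length ys = n \<and> map ((!) (z @ ys)) [N..<N + n] \<in> X \<and> (\<forall>i<d. (z @ ys) ! (N + Is ! i) = (z @ ys) ! (tI ! i))"
      then obtain ys where ys: "length ys = n" "map ((!) (z @ ys)) [N..<N + n] \<in> X" "\<forall>i<d. (z @ ys) ! (N + Is ! i) = (z @ ys) ! (tI ! i)" by blast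
      have "ys \<in> X" using ys blk[OF lz ys(1)] by simp
      moreover have "proj I ys = map ((!) z) tI"
        using ys(3) ys(1) lz tI Is_lt nth_mem by (subst projI_eq) (auto simp: nth_append)
      ultimately show "\<exists>x\<in>X. proj I x = map ((!) z) tI" by blast
    next
      assume "\<exists>x\<in>X. proj I x = map ((!) z) tI"
      then obtain x where x: "x \<in> X" "proj I x = map ((!) z) tI" by blast
      then have lx: "length x = n" using X_len by simp
      have "\<forall>i<d. (z @ x) ! (N + Is ! i) = (z @ x) ! (tI ! i)"
        using x(2) lx lz tI Is_lt nth_mem projI_eq[OF lx, of "map ((!) z) tI"] by (auto simp: nth_append)
      then show "\<exists>ys. length ys = n \<and> map ((!) (z @ ys)) [N..<N + n] \<in> X \<and> (\<forall>i<d. (z @ ys) ! (N + Is ! i) = (z @ ys) ! (tI ! i))"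
        using x lx blk[OF lz lx] by (intro exI[of _ x]) auto
    qed
  qed
qed

lemma g_graph: "{t @ [g t] | t. t \<in> T} \<in> D (Suc d)"
proof -
  define P where "P z \<longleftrightarrow> (\<exists>x\<in>X. proj I x = take d z) \<and> (\<forall>x\<in>X. proj I x = take d z \<longrightarrow> z ! d \<le> f x) \<and>
      (\<forall>b. (\<forall>x\<in>X. proj I x = take d z \<longrightarrow> b \<le> f x) \<longrightarrow> b \<le> z ! d)" for z
  have tk: "map ((!) z) [0..<d] = take d z" if "length z \<ge> d" for z :: "'a list"
    using that by (intro nth_equalityI) auto
  have "defb D (Suc d) P"
  proof -
    have d1: "defb D (Suc d) (\<lambda>z. \<exists>x\<in>X. proj I x = map ((!) z) [0..<d])" by (rule EX_def) auto
    have d2: "defb D (Suc d) (\<lambda>z. \<forall>x\<in>X. proj I x = map ((!) z) [0..<d] \<longrightarrow> z ! d \<le> f x)" by (rule LB_def) auto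
    have d3': "defb D (Suc (Suc d)) (\<lambda>z. (\<forall>x\<in>X. proj I x = map ((!) z) [0..<d] \<longrightarrow> z ! Suc d \<le> f x) \<longrightarrow> z ! Suc d \<le> z ! d)"
      by (intro defb_imp LB_def defb_le) auto
    have d3: "defb D (Suc d) (\<lambda>z. \<forall>b. (\<forall>x\<in>X. proj I x = map ((!) z) [0..<d] \<longrightarrow> b \<le> f x) \<longrightarrow> b \<le> z ! d)"
      using defb_all[OF d3'] by (rule defb_cong) (auto simp: nth_append)
    show ?thesis using defb_and[OF d1 defb_and[OF d2 d3]] by (rule defb_cong) (simp add: P_def tk)
  qed
  moreover have "{t @ [g t] | t. t \<in> T} = {z \<in> Fn (Suc d). P z}"
  proof (rule set_eqI, rule iffI)
    fix z assume "z \<in> {t @ [g t] | t. t \<in> T}"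
    then obtain t where t: "t \<in> T" "z = t @ [g t]" by blast
    then have lt: "length t = d" unfolding T_def using projI_len by auto
    have inf: "is_inf_of (V t) (g t)" by (rule g_inf[OF t(1)])
    have "P z" unfolding P_def t(2) using lt t(1) inf unfolding T_def V_def is_inf_of_def by auto
    then show "z \<in> {z \<in> Fn (Suc d). P z}" using lt t unfolding Fn_def by simp
  next
    fix z assume "z \<in> {z \<in> Fn (Suc d). P z}"
    then have lz: "length z = Suc d" and P: "P z" unfolding Fn_def by auto
    define t where "t = take d z"
    have zt: "z = t @ [z ! d]" unfolding t_def using lz take_Suc_conv_app_nth[of d z] by simp
    have tT: "t \<in> T" using P unfolding P_def T_def t_def by (metis image_eqI)
    have "is_inf_of (V t) (z ! d)" using P unfolding P_def is_inf_of_def V_def t_def by auto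
    then have "z ! d = g t" using g_inf[OF tT] inf_unique by blast
    then show "z \<in> {t @ [g t] | t. t \<in> T}" using zt tT by auto
  qed
  ultimately show ?thesis unfolding defb_def by simp
qed


definition "EL t0 L b r \<longleftrightarrow> 0 < r \<and> (\<forall>x\<in>X. (\<forall>i<d. \<bar>x ! (Is ! i) - t0 ! i\<bar> < r) \<and>
    (\<forall>j<m. \<bar>\<phi> (x ! (Js ! j)) - b ! j\<bar> < r) \<longrightarrow> L + r \<le> f x)"

lemma Gphi_iff: "[a, w] \<in> {[t, \<phi> t] | t. True} \<longleftrightarrow> w = \<phi> a" by auto

lemma EL_defb: "defb D (Suc m) (\<lambda>z. EL t0 L (take m z) (z ! m))"
proof -
  let ?N = "Suc m"
  have dj: "defb D (?N + Suc n) (\<lambda>y. \<exists>w. [y ! (?N + Js ! j), w] \<in> {[t, \<phi> t] | t. True} \<and> \<bar>w - y ! j\<bar> < y ! m)"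
    if j: "j < m" for j
  proof -
    have "defb D (Suc (?N + Suc n)) (\<lambda>u. map ((!) u) [?N + Js ! j, ?N + Suc n] \<in> {[t, \<phi> t] | t. True} \<and> \<bar>u ! (?N + Suc n) - u ! j\<bar> < u ! m)"
    proof (intro defb_and defb_absdiff)
      show "defb D (Suc (?N + Suc n)) (\<lambda>u. map ((!) u) [?N + Js ! j, ?N + Suc n] \<in> {[t, \<phi> t] | t. True})"
        by (rule defb_mem[OF phi_graph]) (use Js_lt[OF j] in auto)
    qed (use j in auto)
    from defb_ex[OF this] show ?thesis
    proof (rule defb_cong)
      fix x :: "'a list" assume lx: "length x = ?N + Suc n"
      have jn: "Js ! j < n" using Js_lt[OF j] .
      have lt1: "?N + Js ! j < length x" using lx jn dn by arith
      have lt2: "?N + Suc n = length x" using lx by simp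
      have e1: "map ((!) (x @ [c])) [?N + Js ! j, ?N + Suc n] = [x ! (?N + Js ! j), c]" for c
        using nth_append_left[OF lt1] lt2 by simp
      have lt3: "j < length x" "m < length x" using lx j dn by arith+
      have e2: "(x @ [c]) ! (?N + Suc n) = c" "(x @ [c]) ! j = x ! j" "(x @ [c]) ! m = x ! m" for c
        using lt2 nth_append_left[OF lt3(1)] nth_append_left[OF lt3(2)] by simp_all
      show "(\<exists>c. map ((!) (x @ [c])) [?N + Js ! j, ?N + Suc n] \<in> {[t, \<phi> t] | t. True} \<and> \<bar>(x @ [c]) ! (?N + Suc n) - (x @ [c]) ! j\<bar> < (x @ [c]) ! m)
         = (\<exists>w. [x ! (?N + Js ! j), w] \<in> {[t, \<phi> t] | t. True} \<and> \<bar>w - x ! j\<bar> < x ! m)"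
        by (simp only: e1 e2)
    qed
  qed
  have "defb D (?N + Suc n) (\<lambda>y. map ((!) y) [?N..<?N + Suc n] \<in> Gf \<longrightarrow>
      (\<forall>i<d. \<bar>y ! (?N + Is ! i) - t0 ! i\<bar> < y ! m) \<and>
      (\<forall>j<m. \<exists>w. [y ! (?N + Js ! j), w] \<in> {[t, \<phi> t] | t. True} \<and> \<bar>w - y ! j\<bar> < y ! m) \<longrightarrow>
      L + y ! m \<le> y ! (?N + n))"
  proof (intro defb_imp defb_and defb_conj_fin defb_absdiff_c dj defb_c_plus_le)
    show "defb D (?N + Suc n) (\<lambda>y. map ((!) y) [?N..<?N + Suc n] \<in> Gf)" by (rule defb_mem[OF Gf_D]) auto
  qed (auto intro: less_SucI Is_lt)
  from defb_and[OF defb_c_lt[OF lessI[of m], of 0] defb_all_list[OF this]] show ?thesis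
  proof (rule defb_cong)
    fix z :: "'a list" assume lz: "length z = ?N"
    have tk: "take m z @ [z ! m] = z" using lz take_Suc_conv_app_nth[of m z] by simp
    have "(\<forall>x\<in>X. (\<forall>i<d. \<bar>x ! (Is ! i) - t0 ! i\<bar> < z ! m) \<and> (\<forall>j<m. \<bar>\<phi> (x ! (Js ! j)) - take m z ! j\<bar> < z ! m) \<longrightarrow> L + z ! m \<le> f x)
      \<longleftrightarrow> (\<forall>ws. length ws = Suc n \<longrightarrow> ws \<in> Gf \<longrightarrow> ((\<forall>i<d. \<bar>take n ws ! (Is ! i) - t0 ! i\<bar> < z ! m) \<and>
             (\<forall>j<m. \<bar>\<phi> (take n ws ! (Js ! j)) - take m z ! j\<bar> < z ! m) \<longrightarrow> L + z ! m \<le> ws ! n))"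
      by (rule forall_X_Gf)
    also have "\<dots> \<longleftrightarrow> (\<forall>ws. length ws = Suc n \<longrightarrow> map ((!) (z @ ws)) [?N..<?N + Suc n] \<in> Gf \<longrightarrow>
      (\<forall>i<d. \<bar>(z @ ws) ! (?N + Is ! i) - t0 ! i\<bar> < (z @ ws) ! m) \<and>
      (\<forall>j<m. \<exists>w. [(z @ ws) ! (?N + Js ! j), w] \<in> {[t, \<phi> t] | t. True} \<and> \<bar>w - (z @ ws) ! j\<bar> < (z @ ws) ! m) \<longrightarrow>
      L + (z @ ws) ! m \<le> (z @ ws) ! (?N + n))"
    proof (intro all_cong1 imp_cong refl)
      fix ws :: "'a list" assume lw: "length ws = Suc n"
      show "(ws \<in> Gf) = (map ((!) (z @ ws)) [?N..<?N + Suc n] \<in> Gf)" using blk[OF lz lw] by simp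
      have b: "(\<forall>i<d. \<bar>take n ws ! (Is ! i) - t0 ! i\<bar> < z ! m) = (\<forall>i<d. \<bar>(z @ ws) ! (?N + Is ! i) - t0 ! i\<bar> < (z @ ws) ! m)"
        using lz lw Is_lt by (auto simp: nth_append)
      have c: "(\<forall>j<m. \<bar>\<phi> (take n ws ! (Js ! j)) - take m z ! j\<bar> < z ! m) =
            (\<forall>j<m. \<exists>w. [(z @ ws) ! (?N + Js ! j), w] \<in> {[t, \<phi> t] | t. True} \<and> \<bar>w - (z @ ws) ! j\<bar> < (z @ ws) ! m)"
        using lz lw Js_lt by (auto simp: nth_append)
      show "((\<forall>i<d. \<bar>take n ws ! (Is ! i) - t0 ! i\<bar> < z ! m) \<and> (\<forall>j<m. \<bar>\<phi> (take n ws ! (Js ! j)) - take m z ! j\<bar> < z ! m)) =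
        ((\<forall>i<d. \<bar>(z @ ws) ! (?N + Is ! i) - t0 ! i\<bar> < (z @ ws) ! m) \<and>
         (\<forall>j<m. \<exists>w. [(z @ ws) ! (?N + Js ! j), w] \<in> {[t, \<phi> t] | t. True} \<and> \<bar>w - (z @ ws) ! j\<bar> < (z @ ws) ! m))"
        using b c by simp
      show "(L + z ! m \<le> ws ! n) = (L + (z @ ws) ! m \<le> (z @ ws) ! (?N + n))" using lz by (simp add: nth_append)
    qed
    finally show "(0 < z ! m \<and> (\<forall>ys. length ys = Suc n \<longrightarrow> (map ((!) (z @ ys)) [?N..<?N + Suc n] \<in> Gf \<longrightarrow>
      (\<forall>i<d. \<bar>(z @ ys) ! (?N + Is ! i) - t0 ! i\<bar> < (z @ ys) ! m) \<and>
      (\<forall>j<m. \<exists>w. [(z @ ys) ! (?N + Js ! j), w] \<in> {[t, \<phi> t] | t. True} \<and> \<bar>w - (z @ ys) ! j\<bar> < (z @ ys) ! m) \<longrightarrow>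
      L + (z @ ys) ! m \<le> (z @ ys) ! (?N + n)))) = EL t0 L (take m z) (z ! m)"
      unfolding EL_def by simp
  qed
qed


definition "box A B = {y \<in> psi \<phi> I ` X. proj I y \<in> A \<and> proj J y \<in> B}"
definition "grph A h = {y \<in> Fn n. proj I y \<in> A \<and> proj J y = h (proj I y)}"

lemma normal_unpack:
  assumes t0: "t0 \<in> T" and lb: "length b = m"
  shows "\<exists>A B. open_Fn d A \<and> t0 \<in> A \<and> open_Fn m B \<and> b \<in> B \<and>
     (box A B = {} \<or> (\<exists>h. (\<forall>x\<in>A. h x \<in> B) \<and> continuous_Fn d m A h \<and> box A B = grph A h))"
proof -
  have "good_pt D \<phi> n I X t0" using spec t0 unfolding special_submanifold_def T_def by blast
  moreover have "b \<in> Fn (n - card I)" using lb cardI unfolding Fn_def by simp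
  ultimately have "normal_pt D n I (psi \<phi> I ` X) t0 b" unfolding good_pt_def by blast
  then show ?thesis unfolding normal_pt_def Let_def cardI box_def grph_def by blast
qed

lemma psiX: "x \<in> X \<Longrightarrow> psi \<phi> I x \<in> psi \<phi> I ` X" by blast

lemma projJ_psi_nth:
  assumes x: "x \<in> X" and j: "j < m"
  shows "proj J (psi \<phi> I x) ! j = \<phi> (x ! (Js ! j))"
proof -
  have "proj J (psi \<phi> I x) ! j = map \<phi> (proj J x) ! j" using projJ_psi[OF X_len[OF x]] by simp
  also have "\<dots> = \<phi> (proj J x ! j)" by (rule nth_map) (simp add: projJ_len j)
  also have "proj J x ! j = x ! (Js ! j)" by (rule projJ_nth[OF j])
  finally show ?thesis .
qed

lemma in_box:
  assumes x: "x \<in> X" and lt0: "length t0 = d" and lb: "length b = m"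
    and A: "\<forall>y. length y = d \<longrightarrow> (\<forall>i<d. \<bar>y ! i - t0 ! i\<bar> < eA) \<longrightarrow> y \<in> A"
    and B: "\<forall>y. length y = m \<longrightarrow> (\<forall>i<m. \<bar>y ! i - b ! i\<bar> < eB) \<longrightarrow> y \<in> B"
    and c1: "\<forall>i<d. \<bar>x ! (Is ! i) - t0 ! i\<bar> < r" and c2: "\<forall>j<m. \<bar>\<phi> (x ! (Js ! j)) - b ! j\<bar> < r"
    and r: "r \<le> eA" "r \<le> eB"
  shows "psi \<phi> I x \<in> box A B" "proj I x \<in> A" "proj J (psi \<phi> I x) \<in> B"
proof -
  have "\<forall>i<d. \<bar>proj I x ! i - t0 ! i\<bar> < eA"
  proof (intro allI impI)
    fix i assume i: "i < d"
    have "\<bar>x ! (Is ! i) - t0 ! i\<bar> < r" using c1 i by blast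
    then show "\<bar>proj I x ! i - t0 ! i\<bar> < eA" using projI_nth[OF i, of x] r by simp
  qed
  then have "proj I x \<in> A" using A projI_len by blast
  moreover have "\<forall>i<m. \<bar>proj J (psi \<phi> I x) ! i - b ! i\<bar> < eB"
  proof (intro allI impI)
    fix i assume i: "i < m"
    have "\<bar>\<phi> (x ! (Js ! i)) - b ! i\<bar> < r" using c2 i by blast
    then show "\<bar>proj J (psi \<phi> I x) ! i - b ! i\<bar> < eB" using projJ_psi_nth[OF x i] r by simp
  qed
  then have "proj J (psi \<phi> I x) \<in> B" using B projJ_len by blast
  ultimately show "psi \<phi> I x \<in> box A B" "proj I x \<in> A" "proj J (psi \<phi> I x) \<in> B"
    unfolding box_def using x projI_psi[OF X_len[OF x]] by auto
qed

lemma graph_near: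
  assumes hc: "continuous_Fn d m A h" and bg: "box A B = grph A h"
    and x0: "x0 \<in> X" "proj I x0 \<in> A" "proj J (psi \<phi> I x0) \<in> B" and df: "df > 0"
  shows "\<exists>\<rho>>0. \<forall>x\<in>X. proj I x \<in> A \<longrightarrow> proj J (psi \<phi> I x) \<in> B \<longrightarrow>
            (\<forall>i<d. \<bar>proj I x ! i - proj I x0 ! i\<bar> < \<rho>) \<longrightarrow> (\<forall>k<n. \<bar>x ! k - x0 ! k\<bar> < df)"
proof -
  have lx0: "length x0 = n" using X_len[OF x0(1)] .
  have "psi \<phi> I x0 \<in> box A B" unfolding box_def using x0 projI_psi[OF lx0] by auto
  then have "psi \<phi> I x0 \<in> grph A h" using bg by simp
  then have hx0: "proj J (psi \<phi> I x0) = h (proj I x0)" unfolding grph_def using projI_psi[OF lx0] by simp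
  have "\<exists>\<epsilon>>0. \<forall>j<m. \<forall>t. \<bar>\<phi> t - \<phi> (x0 ! (Js ! j))\<bar> < \<epsilon> \<longrightarrow> \<bar>t - x0 ! (Js ! j)\<bar> < df"
  proof (rule fin_min)
    show "\<exists>e>0. \<forall>t. \<bar>\<phi> t - \<phi> (x0 ! (Js ! j))\<bar> < e \<longrightarrow> \<bar>t - x0 ! (Js ! j)\<bar> < df" for j
      by (rule phi_inv_close[OF df])
    show "\<And>j e e'. \<forall>t. \<bar>\<phi> t - \<phi> (x0 ! (Js ! j))\<bar> < e \<longrightarrow> \<bar>t - x0 ! (Js ! j)\<bar> < df \<Longrightarrow> 0 < e' \<Longrightarrow> e' \<le> e \<Longrightarrow>
        \<forall>t. \<bar>\<phi> t - \<phi> (x0 ! (Js ! j))\<bar> < e' \<longrightarrow> \<bar>t - x0 ! (Js ! j)\<bar> < df" by fastforce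
  qed
  then obtain \<epsilon> where eps: "\<epsilon> > 0" "\<forall>j<m. \<forall>t. \<bar>\<phi> t - \<phi> (x0 ! (Js ! j))\<bar> < \<epsilon> \<longrightarrow> \<bar>t - x0 ! (Js ! j)\<bar> < df" by blast
  obtain dh where dh: "dh > 0" "\<forall>a'\<in>A. (\<forall>i<d. \<bar>a' ! i - proj I x0 ! i\<bar> < dh) \<longrightarrow> (\<forall>j<m. \<bar>h a' ! j - h (proj I x0) ! j\<bar> < \<epsilon>)"
    using hc x0(2) eps(1) unfolding continuous_Fn_def by blast
  show ?thesis
  proof (intro exI[of _ "min dh df"] conjI ballI impI allI)
    show "0 < min dh df" using dh df by simp
    fix x k assume x: "x \<in> X" and xA: "proj I x \<in> A" and xB: "proj J (psi \<phi> I x) \<in> B"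
      and cl: "\<forall>i<d. \<bar>proj I x ! i - proj I x0 ! i\<bar> < min dh df" and k: "k < n"
    have lx: "length x = n" using X_len[OF x] .
    have "psi \<phi> I x \<in> box A B" unfolding box_def using x xA xB projI_psi[OF lx] by auto
    then have "psi \<phi> I x \<in> grph A h" using bg by simp
    then have hx: "proj J (psi \<phi> I x) = h (proj I x)" unfolding grph_def using projI_psi[OF lx] by simp
    have hcl: "\<forall>j<m. \<bar>h (proj I x) ! j - h (proj I x0) ! j\<bar> < \<epsilon>" using dh(2) xA cl by auto
    have cJ: "\<forall>j<m. \<bar>x ! (Js ! j) - x0 ! (Js ! j)\<bar> < df"
    proof (intro allI impI)
      fix j assume j: "j < m"
      have "\<bar>\<phi> (x ! (Js ! j)) - \<phi> (x0 ! (Js ! j))\<bar> < \<epsilon>"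
        using hcl j hx hx0 projJ_psi_nth[OF x j] projJ_psi_nth[OF x0(1) j] by metis
      then show "\<bar>x ! (Js ! j) - x0 ! (Js ! j)\<bar> < df" using eps(2) j by blast
    qed
    have cI: "\<forall>i<d. \<bar>x ! (Is ! i) - x0 ! (Is ! i)\<bar> < df"
    proof (intro allI impI)
      fix i assume i: "i < d"
      have "\<bar>proj I x ! i - proj I x0 ! i\<bar> < min dh df" using cl i by blast
      then show "\<bar>x ! (Is ! i) - x0 ! (Is ! i)\<bar> < df" using projI_nth[OF i, of x] projI_nth[OF i, of x0] by simp
    qed
    show "\<bar>x ! k - x0 ! k\<bar> < df" using close_all[OF lx lx0 cI cJ] k by blast
  qed
qed


lemma EL_mono: "EL t0 L b r \<Longrightarrow> 0 < r' \<Longrightarrow> r' \<le> r \<Longrightarrow> EL t0 L b r'"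
proof -
  assume h: "EL t0 L b r" "0 < r'" "r' \<le> r"
  show ?thesis unfolding EL_def
  proof (intro conjI ballI impI)
    show "0 < r'" by fact
    fix x assume x: "x \<in> X" and c: "(\<forall>i<d. \<bar>x ! (Is ! i) - t0 ! i\<bar> < r') \<and> (\<forall>j<m. \<bar>\<phi> (x ! (Js ! j)) - b ! j\<bar> < r')"
    have "(\<forall>i<d. \<bar>x ! (Is ! i) - t0 ! i\<bar> < r) \<and> (\<forall>j<m. \<bar>\<phi> (x ! (Js ! j)) - b ! j\<bar> < r)"
      using c h(3) by (meson less_le_trans)
    then have "L + r \<le> f x" using h(1) x unfolding EL_def by blast
    then show "L + r' \<le> f x" using h(3) by simp
  qed
qed

lemma EL_lip:
  assumes "EL t0 L b r" "0 < s" "s \<le> r" "\<forall>i<m. \<bar>b' ! i - b ! i\<bar> + s \<le> r"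
  shows "EL t0 L b' s"
  unfolding EL_def
proof (intro conjI ballI impI)
  show "0 < s" by fact
  fix x assume x: "x \<in> X" and c: "(\<forall>i<d. \<bar>x ! (Is ! i) - t0 ! i\<bar> < s) \<and> (\<forall>j<m. \<bar>\<phi> (x ! (Js ! j)) - b' ! j\<bar> < s)"
  have c1: "\<forall>i<d. \<bar>x ! (Is ! i) - t0 ! i\<bar> < r" using c assms(3) by (meson less_le_trans)
  have c2: "\<forall>j<m. \<bar>\<phi> (x ! (Js ! j)) - b ! j\<bar> < r"
  proof (intro allI impI)
    fix j assume j: "j < m"
    have "\<bar>\<phi> (x ! (Js ! j)) - b ! j\<bar> \<le> \<bar>\<phi> (x ! (Js ! j)) - b' ! j\<bar> + \<bar>b' ! j - b ! j\<bar>"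
      using abs_triangle_ineq[of "\<phi> (x ! (Js ! j)) - b' ! j" "b' ! j - b ! j"] by simp
    also have "\<dots> < s + \<bar>b' ! j - b ! j\<bar>" using c j by simp
    also have "\<dots> \<le> r" using assms(4) j by (simp add: add.commute)
    finally show "\<bar>\<phi> (x ! (Js ! j)) - b ! j\<bar> < r" .
  qed
  have "L + r \<le> f x" using assms(1) x c1 c2 unfolding EL_def by blast
  then show "L + s \<le> f x" using assms(3) by simp
qed

lemma EL_loc:
  assumes t0: "t0 \<in> T" and L: "\<forall>x\<in>X. proj I x = t0 \<longrightarrow> L < f x" and lb: "length b = m"
  shows "\<exists>r>0. EL t0 L b r"
proof -
  have lt0: "length t0 = d" using t0 projI_len unfolding T_def by auto
  obtain A B where AB: "open_Fn d A" "t0 \<in> A" "open_Fn m B" "b \<in> B"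
    and cases: "box A B = {} \<or> (\<exists>h. (\<forall>x\<in>A. h x \<in> B) \<and> continuous_Fn d m A h \<and> box A B = grph A h)"
    using normal_unpack[OF t0 lb] by blast
  obtain eA where eA: "eA > 0" "\<forall>y. length y = d \<longrightarrow> (\<forall>i<d. \<bar>y ! i - t0 ! i\<bar> < eA) \<longrightarrow> y \<in> A"
    using open_FnD[OF AB(1,2)] by blast
  obtain eB where eB: "eB > 0" "\<forall>y. length y = m \<longrightarrow> (\<forall>i<m. \<bar>y ! i - b ! i\<bar> < eB) \<longrightarrow> y \<in> B"
    using open_FnD[OF AB(3,4)] by blast
  from cases show ?thesis
  proof
    assume empty: "box A B = {}"
    show ?thesis
    proof (intro exI[of _ "min eA eB"] conjI)
      show "0 < min eA eB" using eA eB by simp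
      show "EL t0 L b (min eA eB)" unfolding EL_def
      proof (intro conjI ballI impI)
        show "0 < min eA eB" using eA eB by simp
        fix x assume x: "x \<in> X" and c: "(\<forall>i<d. \<bar>x ! (Is ! i) - t0 ! i\<bar> < min eA eB) \<and> (\<forall>j<m. \<bar>\<phi> (x ! (Js ! j)) - b ! j\<bar> < min eA eB)"
        have "psi \<phi> I x \<in> box A B"
          by (rule in_box(1)[OF x lt0 lb eA(2) eB(2), of "min eA eB"]) (use c in auto)
        then show "L + min eA eB \<le> f x" using empty by simp
      qed
    qed
  next
    assume "\<exists>h. (\<forall>x\<in>A. h x \<in> B) \<and> continuous_Fn d m A h \<and> box A B = grph A h"
    then obtain h where hB: "\<forall>x\<in>A. h x \<in> B" and hc: "continuous_Fn d m A h" and bg: "box A B = grph A h" by blast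
    have hlen: "length (h t0) = m" using hB AB(2,3) unfolding open_Fn_def Fn_def by blast
    obtain y0 where y0: "length y0 = n" "proj I y0 = t0" "proj J y0 = h t0" using merge[OF lt0 hlen] by blast
    have "y0 \<in> grph A h" unfolding grph_def Fn_def using y0 AB(2) by simp
    then have "y0 \<in> box A B" using bg by simp
    then obtain x0 where x0: "x0 \<in> X" "y0 = psi \<phi> I x0" and y0B: "proj J y0 \<in> B" unfolding box_def by blast
    have lx0: "length x0 = n" using X_len[OF x0(1)] .
    have px0: "proj I x0 = t0" using y0(2) x0(2) projI_psi[OF lx0] by simp
    have x0B: "proj J (psi \<phi> I x0) \<in> B" using y0B x0(2) by simp
    have Lx0: "L < f x0" using L x0(1) px0 by blast
    define q where "q = (f x0 - L) / 2"
    have q: "q > 0" using Lx0 unfolding q_def by simp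
    obtain df where df: "df > 0" "\<forall>x'\<in>X. (\<forall>k<n. \<bar>x' ! k - x0 ! k\<bar> < df) \<longrightarrow> (\<forall>j<1. \<bar>[f x'] ! j - [f x0] ! j\<bar> < q)"
      using fcont x0(1) q unfolding continuous_Fn_def by blast
    obtain \<rho> where rho: "\<rho> > 0" "\<forall>x\<in>X. proj I x \<in> A \<longrightarrow> proj J (psi \<phi> I x) \<in> B \<longrightarrow>
            (\<forall>i<d. \<bar>proj I x ! i - proj I x0 ! i\<bar> < \<rho>) \<longrightarrow> (\<forall>k<n. \<bar>x ! k - x0 ! k\<bar> < df)"
      using graph_near[OF hc bg x0(1) _ x0B df(1)] px0 AB(2) by blast
    define r where "r = min (min eA eB) (min \<rho> q)"
    have r: "r > 0" "r \<le> eA" "r \<le> eB" "r \<le> \<rho>" "r \<le> q" using eA eB rho q unfolding r_def by auto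
    show ?thesis
    proof (intro exI[of _ r] conjI)
      show "0 < r" by (rule r(1))
      show "EL t0 L b r" unfolding EL_def
      proof (intro conjI ballI impI)
        show "0 < r" by (rule r(1))
        fix x assume x: "x \<in> X" and c: "(\<forall>i<d. \<bar>x ! (Is ! i) - t0 ! i\<bar> < r) \<and> (\<forall>j<m. \<bar>\<phi> (x ! (Js ! j)) - b ! j\<bar> < r)"
        have xA: "proj I x \<in> A" and xB: "proj J (psi \<phi> I x) \<in> B"
          using in_box(2,3)[OF x lt0 lb eA(2) eB(2), of r] c r by auto
        have "\<forall>i<d. \<bar>proj I x ! i - proj I x0 ! i\<bar> < \<rho>"
        proof (intro allI impI)
          fix i assume i: "i < d"
          have "\<bar>x ! (Is ! i) - t0 ! i\<bar> < r" using c i by blast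
          then show "\<bar>proj I x ! i - proj I x0 ! i\<bar> < \<rho>" using projI_nth[OF i, of x] px0 r(4) by simp
        qed
        then have "\<forall>k<n. \<bar>x ! k - x0 ! k\<bar> < df" using rho(2) x xA xB by blast
        then have "\<bar>f x - f x0\<bar> < q" using df(2) x by fastforce
        then have "f x0 - q < f x" by (simp add: abs_less_iff)
        moreover have "f x0 - q = L + q" unfolding q_def by (simp add: field_simps)
        ultimately show "L + r \<le> f x" using r(5) by simp
      qed
    qed
  qed
qed


lemma EL_unif:
  assumes t0: "t0 \<in> T" and L: "\<forall>x\<in>X. proj I x = t0 \<longrightarrow> L < f x"
  shows "\<exists>r>0. \<forall>b\<in>cube m. EL t0 L b r"
proof (rule cptm[OF EL_defb])
  show "\<And>b r r'. EL t0 L b r \<Longrightarrow> 0 < r' \<Longrightarrow> r' \<le> r \<Longrightarrow> EL t0 L b r'" by (rule EL_mono)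
  show "\<And>b b' r s. length b = m \<Longrightarrow> length b' = m \<Longrightarrow> EL t0 L b r \<Longrightarrow> 0 < s \<Longrightarrow> s \<le> r \<Longrightarrow>
          \<forall>i<m. \<bar>b' ! i - b ! i\<bar> + s \<le> r \<Longrightarrow> EL t0 L b' s" by (rule EL_lip)
  show "\<And>b. b \<in> cube m \<Longrightarrow> \<exists>r>0. EL t0 L b r" using EL_loc[OF t0 L] unfolding cube_def by blast
qed

lemma fiber_cube: "x \<in> X \<Longrightarrow> proj J (psi \<phi> I x) \<in> cube m"
  unfolding cube_def using projJ_len projJ_psi_nth phi_range by (auto simp: less_imp_le)

lemma fiber_box:
  assumes x: "x \<in> X" and E: "EL t0 L (proj J (psi \<phi> I x)) r" and c: "\<forall>i<d. \<bar>proj I x ! i - t0 ! i\<bar> < r"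
  shows "L + r \<le> f x"
proof -
  have r: "0 < r" using E unfolding EL_def by blast
  have c1: "\<forall>i<d. \<bar>x ! (Is ! i) - t0 ! i\<bar> < r" using c projI_nth by metis
  have c2: "\<forall>j<m. \<bar>\<phi> (x ! (Js ! j)) - proj J (psi \<phi> I x) ! j\<bar> < r" using projJ_psi_nth[OF x] r by simp
  show ?thesis using E x c1 c2 unfolding EL_def by blast
qed

lemma inf_lower: "t \<in> T \<Longrightarrow> \<forall>x\<in>X. proj I x = t \<longrightarrow> c \<le> f x \<Longrightarrow> c \<le> g t"
  using g_inf unfolding is_inf_of_def V_def by blast

lemma inf_le: "t \<in> T \<Longrightarrow> x \<in> X \<Longrightarrow> proj I x = t \<Longrightarrow> g t \<le> f x"
  using g_inf unfolding is_inf_of_def V_def by blast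

lemma g_pos: assumes t0: "t0 \<in> T" shows "0 < g t0"
proof -
  obtain r where r: "r > 0" "\<forall>b\<in>cube m. EL t0 0 b r" using EL_unif[OF t0] fpos by blast
  have "\<forall>x\<in>X. proj I x = t0 \<longrightarrow> r \<le> f x"
  proof (intro ballI impI)
    fix x assume x: "x \<in> X" and px: "proj I x = t0"
    have "0 + r \<le> f x" using fiber_box[OF x r(2)[rule_format, OF fiber_cube[OF x]]] px r(1) by simp
    then show "r \<le> f x" by simp
  qed
  then have "r \<le> g t0" using inf_lower[OF t0] by blast
  then show ?thesis using r(1) by simp
qed

lemma g_cont: "continuous_Fn d 1 T (\<lambda>t. [g t])"
  unfolding continuous_Fn_def
proof (intro ballI allI impI)
  fix t0 e assume t0: "t0 \<in> T" and e: "(0::'a) < e"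
  have lt0: "length t0 = d" using t0 projI_len unfolding T_def by auto
  define L where "L = g t0 - e"
  have L: "\<forall>x\<in>X. proj I x = t0 \<longrightarrow> L < f x" using inf_le[OF t0] e unfolding L_def by fastforce
  obtain r1 where r1: "r1 > 0" "\<forall>b\<in>cube m. EL t0 L b r1" using EL_unif[OF t0 L] by blast
  have "\<exists>x0\<in>X. proj I x0 = t0 \<and> f x0 < g t0 + e"
  proof (rule ccontr)
    assume "\<not> ?thesis"
    then have "\<forall>x\<in>X. proj I x = t0 \<longrightarrow> g t0 + e \<le> f x" by (auto simp: not_less)
    then have "g t0 + e \<le> g t0" using inf_lower[OF t0] by blast
    then show False using e by simp
  qed
  then obtain x0 where x0: "x0 \<in> X" "proj I x0 = t0" "f x0 < g t0 + e" by blast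
  have lx0: "length x0 = n" using X_len[OF x0(1)] .
  obtain A B where AB: "open_Fn d A" "t0 \<in> A" "open_Fn m B" "proj J (psi \<phi> I x0) \<in> B"
    and cases: "box A B = {} \<or> (\<exists>h. (\<forall>x\<in>A. h x \<in> B) \<and> continuous_Fn d m A h \<and> box A B = grph A h)"
    using normal_unpack[OF t0 projJ_len[of "psi \<phi> I x0"]] by blast
  have "psi \<phi> I x0 \<in> box A B" unfolding box_def using x0 AB projI_psi[OF lx0] by auto
  then obtain h where hB: "\<forall>x\<in>A. h x \<in> B" and hc: "continuous_Fn d m A h" and bg: "box A B = grph A h"
    using cases by blast
  define q where "q = g t0 + e - f x0"
  have q: "q > 0" using x0(3) unfolding q_def by simp
  obtain df where df: "df > 0" "\<forall>x'\<in>X. (\<forall>k<n. \<bar>x' ! k - x0 ! k\<bar> < df) \<longrightarrow> (\<forall>j<1. \<bar>[f x'] ! j - [f x0] ! j\<bar> < q)"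
    using fcont x0(1) q unfolding continuous_Fn_def by blast
  obtain \<rho> where rho: "\<rho> > 0" "\<forall>x\<in>X. proj I x \<in> A \<longrightarrow> proj J (psi \<phi> I x) \<in> B \<longrightarrow>
          (\<forall>i<d. \<bar>proj I x ! i - proj I x0 ! i\<bar> < \<rho>) \<longrightarrow> (\<forall>k<n. \<bar>x ! k - x0 ! k\<bar> < df)"
    using graph_near[OF hc bg x0(1) _ AB(4) df(1)] x0(2) AB(2) by blast
  obtain eA where eA: "eA > 0" "\<forall>y. length y = d \<longrightarrow> (\<forall>i<d. \<bar>y ! i - t0 ! i\<bar> < eA) \<longrightarrow> y \<in> A"
    using open_FnD[OF AB(1,2)] by blast
  define \<delta> where "\<delta> = min r1 (min eA \<rho>)"
  show "\<exists>\<delta>>0. \<forall>a'\<in>T. (\<forall>i<d. \<bar>a' ! i - t0 ! i\<bar> < \<delta>) \<longrightarrow> (\<forall>j<1. \<bar>[g a'] ! j - [g t0] ! j\<bar> < e)"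
  proof (intro exI[of _ \<delta>] conjI ballI impI allI)
    show "0 < \<delta>" unfolding \<delta>_def using r1 eA rho by simp
    fix t j assume t: "t \<in> T" and cl: "\<forall>i<d. \<bar>t ! i - t0 ! i\<bar> < \<delta>" and j: "j < (1::nat)"
    have lt: "length t = d" using t projI_len unfolding T_def by auto
    have lo: "L + r1 \<le> g t"
    proof (rule inf_lower[OF t], intro ballI impI)
      fix x assume x: "x \<in> X" and px: "proj I x = t"
      have "\<forall>i<d. \<bar>proj I x ! i - t0 ! i\<bar> < r1" using cl px unfolding \<delta>_def by fastforce
      then show "L + r1 \<le> f x" using fiber_box[OF x r1(2)[rule_format, OF fiber_cube[OF x]]] by blast
    qed
    have tA: "t \<in> A" using eA(2) lt cl unfolding \<delta>_def by fastforce
    then have htB: "h t \<in> B" using hB by blast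
    have lht: "length (h t) = m" using htB AB(3) unfolding open_Fn_def Fn_def by blast
    obtain y where y: "length y = n" "proj I y = t" "proj J y = h t" using merge[OF lt lht] by blast
    have "y \<in> grph A h" unfolding grph_def Fn_def using y tA by simp
    then have "y \<in> box A B" using bg by simp
    then obtain xt where xt: "xt \<in> X" "y = psi \<phi> I xt" and yB: "proj J y \<in> B" unfolding box_def by blast
    have lxt: "length xt = n" using X_len[OF xt(1)] .
    have pxt: "proj I xt = t" using y(2) xt(2) projI_psi[OF lxt] by simp
    have "\<forall>i<d. \<bar>proj I xt ! i - proj I x0 ! i\<bar> < \<rho>" using cl pxt x0(2) unfolding \<delta>_def by fastforce
    then have "\<forall>k<n. \<bar>xt ! k - x0 ! k\<bar> < df" using rho(2) xt(1) pxt tA yB xt(2) by blast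
    then have "\<bar>f xt - f x0\<bar> < q" using df(2) xt(1) by fastforce
    then have "f xt < g t0 + e" unfolding q_def by (simp add: abs_less_iff)
    moreover have "g t \<le> f xt" using inf_le[OF t xt(1) pxt] .
    ultimately have up: "g t < g t0 + e" by simp
    have "\<bar>g t - g t0\<bar> < e" using lo up r1(1) unfolding L_def by (simp add: abs_less_iff)
    then show "\<bar>[g t] ! j - [g t0] ! j\<bar> < e" using j by simp
  qed
qed

end


theorem proposition2p9:
  fixes D :: "nat \<Rightarrow> ('a::linordered_field) list set set"
    and \<phi> :: "'a \<Rightarrow> 'a" and n d :: nat and I :: "nat set"
    and X :: "'a list set" and f :: "'a list \<Rightarrow> 'a"
  assumes "ofield_structure D" and "locally_o_minimal D" and "definably_complete D"
    and "def_homeo_01 D \<phi>"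
    and "coord_proj n d I"
    and "X \<in> D n" and "has_dim n X d" and "special_submanifold D \<phi> n I X"
    and "\<forall>x\<in>X. 0 < f x"
    and "def_map D n 1 X (\<lambda>x. [f x])"
    and "continuous_Fn n 1 X (\<lambda>x. [f x])"
  shows "\<exists>g. (\<forall>t \<in> proj I ` X. is_inf_of {f x | x. x \<in> X \<and> proj I x = t} (g t)) \<and>
             (\<forall>t \<in> proj I ` X. 0 < g t) \<and>
             def_map D d 1 (proj I ` X) (\<lambda>t. [g t]) \<and>
             continuous_Fn d 1 (proj I ` X) (\<lambda>t. [g t])"
proof -
  have S: "setting D \<phi> n d I X f"
    using assms unfolding setting_def setting_axioms_def dcstr_def dcstr_axioms_def dstr_def by blast
  interpret S: setting D \<phi> n d I X f by (rule S)
  show ?thesis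
  proof (intro exI[of _ S.g] conjI)
    show "\<forall>t\<in>proj I ` X. is_inf_of {f x |x. x \<in> X \<and> proj I x = t} (S.g t)"
      using S.g_inf unfolding S.T_def S.V_def by blast
    show "\<forall>t\<in>proj I ` X. 0 < S.g t" using S.g_pos unfolding S.T_def by blast
    show "def_map D d 1 (proj I ` X) (\<lambda>t. [S.g t])"
      unfolding def_map_def using S.g_graph unfolding S.T_def by (simp add: Fn_def)
    show "continuous_Fn d 1 (proj I ` X) (\<lambda>t. [S.g t])" using S.g_cont unfolding S.T_def .
  qed
qed

end
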